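(* Consider the sub-$\ell^\infty$ structure on $\mathbb{R}^2$ defined by $Y_1=\partial_x+x\partial_y$, $Y_2=\partial_x-x\partial_y$. If an extremal pair $(\lambda,\gamma)$ on $[0,T]$ has a regular arc, then $\gamma$ is a regular bang-bang trajectory. Moreover, there is $s>0$ such that all its arcs have length (duration) $s$, except possibly the first and the last arc, whose lengths are at most $s$. At consecutive junctions between regular arcs, the components $u_1$ and $u_2$ of the control change sign alternately.
   Context: Sub-$\ell^\infty$ structure defined by smooth vector fields $X_1,\dots,X_k$ on a manifold $M$ (here $X_1=Y_1$, $X_2=Y_2$): an admissible trajectory is an absolutely continuous curve $\gamma:[0,T]\to M$ together with a measurable control $u=(u_1,\dots,u_k):[0,T]\to\mathbb{R}^k$ with $|u_i(t)|\le1$ for all $i$ and a.e. $t$, such that $\dot\gamma(t)=\sum_i u_i(t)X_i(\gamma(t))$ for a.e. $t$. An extremal pair is a pair $(\lambda,\gamma)$ where $\gamma$ is admissible with control $u$ and $\lambda:[0,T]\to T^*M$ is absolutely continuous with $\lambda(t)\in T^*_{\gamma(t)}M\setminus\{0\}$, such that, with $\mathcal H(\lambda,p,u)=\sum_i u_i\langle\lambda,X_i(p)\rangle$, in canonical coordinates $\dot\lambda=-\partial_p\mathcal H(\lambda,\gamma,u)$, $\dot\gamma=\partial_\lambda\mathcal H(\lambda,\gamma,u)$ a.e., and there is a constant $\lambda_0\ge0$ with $\sum_iu_i(t)\langle\lambda(t),X_i(\gamma(t))\rangle=\sum_i|\langle\lambda(t),X_i(\gamma(t))\rangle|=\lambda_0$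 for a.e. $t$; $\gamma$ is then an extremal trajectory and $\lambda$ an extremal lift. The switching functions are $\varphi_j(t)=\langle\lambda(t),X_j(\gamma(t))\rangle$. The restriction of an extremal pair to an open interval $I$ is a regular arc if $\varphi_j(t)\ne0$ for all $t\in I$ and all $j$; arcs are taken maximal (not contained in a strictly larger open interval with the same property). A regular bang-bang trajectory is an extremal trajectory with an extremal lift such that $[0,T]$ minus finitely many points is a finite union of maximal regular arcs (on each of which the control is then constant with values in $\{1,-1\}^k$); these are its arcs. *)

theory Defs
  imports "HOL-Analysis.Analysis"
begin

text \<open>Points of the manifold M = R^2 are pairs (x,y); covectors at a point are pairs
  (l_x, l_y) acting on tangent vectors by the inner product (canonical coordinates).\<close>

definition Yfield :: "nat \<Rightarrow> real \<times> real \<Rightarrow> real \<times> real" where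
  "Yfield i p = (if i = 1 then (1, fst p) else (1, - fst p))"

definition ucomp :: "nat \<Rightarrow> real \<times> real \<Rightarrow> real" where
  "ucomp i w = (if i = 1 then fst w else snd w)"

definition pairing :: "real \<times> real \<Rightarrow> real \<times> real \<Rightarrow> real" where
  "pairing l v = fst l * fst v + snd l * snd v"

definition Ham :: "real \<times> real \<Rightarrow> real \<times> real \<Rightarrow> real \<times> real \<Rightarrow> real" where
  "Ham l p w = (\<Sum>i\<in>{1,2}. ucomp i w * pairing l (Yfield i p))"

definition dHdp :: "real \<times> real \<Rightarrow> real \<times> real \<Rightarrow> real \<times> real \<Rightarrow> real \<times> real" where
  "dHdp l p w = (deriv (%s. Ham l (s, snd p) w) (fst p),
                 deriv (%s. Ham l (fst p, s) w) (snd p))"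

definition dHdl :: "real \<times> real \<Rightarrow> real \<times> real \<Rightarrow> real \<times> real \<Rightarrow> real \<times> real" where
  "dHdl l p w = (deriv (%s. Ham (s, snd l) p w) (fst l),
                 deriv (%s. Ham (fst l, s) p w) (snd l))"

definition abs_continuous_on :: "real \<Rightarrow> real \<Rightarrow> (real \<Rightarrow> 'a::real_normed_vector) \<Rightarrow> bool" where
  "abs_continuous_on a b f \<longleftrightarrow>
     (\<forall>\<epsilon>>0. \<exists>\<delta>>0. \<forall>(n::nat) (c::nat \<Rightarrow> real) (d::nat \<Rightarrow> real).
        (\<forall>i<n. a \<le> c i \<and> c i \<le> d i \<and> d i \<le> b) \<and>
        (\<forall>i<n. \<forall>j<n. i \<noteq> j \<longrightarrow> d i \<le> c j \<or> d j \<le> c i) \<and>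
        (\<Sum>i<n. d i - c i) < \<delta>
        \<longrightarrow> (\<Sum>i<n. norm (f (d i) - f (c i))) < \<epsilon>)"

definition admissible :: "real \<Rightarrow> (real \<Rightarrow> real \<times> real) \<Rightarrow> (real \<Rightarrow> real \<times> real) \<Rightarrow> bool" where
  "admissible T \<gamma> u \<longleftrightarrow>
     abs_continuous_on 0 T \<gamma> \<and>
     u \<in> borel_measurable (lebesgue_on {0..T}) \<and>
     (AE t in lborel. t \<in> {0..T} \<longrightarrow> (\<forall>i\<in>{1,2}. \<bar>ucomp i (u t)\<bar> \<le> 1)) \<and>
     (AE t in lborel. t \<in> {0..T} \<longrightarrow>
        (\<gamma> has_vector_derivative (\<Sum>i\<in>{1,2}. ucomp i (u t) *\<^sub>R Yfield i (\<gamma> t))) (at t))"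

definition extremal_pair :: "real \<Rightarrow> (real \<Rightarrow> real \<times> real) \<Rightarrow> (real \<Rightarrow> real \<times> real)
     \<Rightarrow> (real \<Rightarrow> real \<times> real) \<Rightarrow> bool" where
  "extremal_pair T lam \<gamma> u \<longleftrightarrow>
     admissible T \<gamma> u \<and>
     abs_continuous_on 0 T lam \<and>
     (\<forall>t\<in>{0..T}. lam t \<noteq> 0) \<and>
     (AE t in lborel. t \<in> {0..T} \<longrightarrow>
        (lam has_vector_derivative - dHdp (lam t) (\<gamma> t) (u t)) (at t) \<and>
        (\<gamma> has_vector_derivative dHdl (lam t) (\<gamma> t) (u t)) (at t)) \<and>
     (\<exists>lam0\<ge>0. AE t in lborel. t \<in> {0..T} \<longrightarrow>
        (\<Sum>i\<in>{1,2}. ucomp i (u t) * pairing (lam t) (Yfield i (\<gamma> t))) =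
          (\<Sum>i\<in>{1,2}. \<bar>pairing (lam t) (Yfield i (\<gamma> t))\<bar>) \<and>
        (\<Sum>i\<in>{1,2}. \<bar>pairing (lam t) (Yfield i (\<gamma> t))\<bar>) = lam0)"

definition switching :: "(real \<Rightarrow> real \<times> real) \<Rightarrow> (real \<Rightarrow> real \<times> real) \<Rightarrow> nat \<Rightarrow> real \<Rightarrow> real" where
  "switching lam \<gamma> j t = pairing (lam t) (Yfield j (\<gamma> t))"

definition regular_interval :: "real \<Rightarrow> (real \<Rightarrow> real \<times> real) \<Rightarrow> (real \<Rightarrow> real \<times> real)
     \<Rightarrow> real \<Rightarrow> real \<Rightarrow> bool" where
  "regular_interval T lam \<gamma> a b \<longleftrightarrow>
     0 \<le> a \<and> a < b \<and> b \<le> T \<and>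
     (\<forall>t\<in>{a<..<b}. \<forall>j\<in>{1,2}. switching lam \<gamma> j t \<noteq> 0)"

definition regular_arc :: "real \<Rightarrow> (real \<Rightarrow> real \<times> real) \<Rightarrow> (real \<Rightarrow> real \<times> real)
     \<Rightarrow> real \<Rightarrow> real \<Rightarrow> bool" where
  "regular_arc T lam \<gamma> a b \<longleftrightarrow>
     regular_interval T lam \<gamma> a b \<and>
     (\<forall>a' b'. regular_interval T lam \<gamma> a' b' \<and> {a<..<b} \<subseteq> {a'<..<b'} \<longrightarrow> a' = a \<and> b' = b)"

definition regular_bang_bang :: "real \<Rightarrow> (real \<Rightarrow> real \<times> real) \<Rightarrow> (real \<Rightarrow> real \<times> real) \<Rightarrow> bool" where
  "regular_bang_bang T lam \<gamma> \<longleftrightarrow>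
     (\<exists>F A. finite F \<and> finite A \<and>
        (\<forall>(a,b)\<in>A. regular_arc T lam \<gamma> a b) \<and>
        {0..T} - F = (\<Union>(a,b)\<in>A. {a<..<b}))"

definition junction :: "real \<Rightarrow> (real \<Rightarrow> real \<times> real) \<Rightarrow> (real \<Rightarrow> real \<times> real) \<Rightarrow> real \<Rightarrow> bool" where
  "junction T lam \<gamma> t \<longleftrightarrow> (\<exists>a b. regular_arc T lam \<gamma> a t \<and> regular_arc T lam \<gamma> t b)"

definition switches_only :: "real \<Rightarrow> (real \<Rightarrow> real \<times> real) \<Rightarrow> (real \<Rightarrow> real \<times> real)
     \<Rightarrow> (real \<Rightarrow> real \<times> real) \<Rightarrow> nat \<Rightarrow> real \<Rightarrow> bool" where
  "switches_only T lam \<gamma> u i t \<longleftrightarrow>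
     (\<forall>a b. regular_arc T lam \<gamma> a t \<and> regular_arc T lam \<gamma> t b \<longrightarrow>
        (\<exists>\<sigma>\<in>{-1,1::real}.
           (AE s in lborel. s \<in> {a<..<t} \<longrightarrow> ucomp i (u s) = \<sigma>) \<and>
           (AE s in lborel. s \<in> {t<..<b} \<longrightarrow> ucomp i (u s) = - \<sigma>)) \<and>
        (\<exists>\<rho>\<in>{-1,1::real}.
           (AE s in lborel. s \<in> {a<..<b} \<longrightarrow> ucomp (3 - i) (u s) = \<rho>)))"

end

theory Submission
  imports Defs
begin

lemma acD:
  assumes "abs_continuous_on a b f" "e > 0"
  shows "\<exists>d>0. \<forall>(n::nat) (c::nat\<Rightarrow>real) (dd::nat\<Rightarrow>real). (\<forall>i<n. a \<le> c i \<and> c i \<le> dd i \<and> dd i \<le> b) \<and>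
        (\<forall>i<n. \<forall>j<n. i \<noteq> j \<longrightarrow> dd i \<le> c j \<or> dd j \<le> c i) \<and>
        (\<Sum>i<n. dd i - c i) < d \<longrightarrow> (\<Sum>i<n. norm (f (dd i) - f (c i))) < e"
proof -
  from assms(1) have "\<forall>\<epsilon>. \<epsilon> > 0 \<longrightarrow> (\<exists>d>0. \<forall>(n::nat) (c::nat\<Rightarrow>real) (dd::nat\<Rightarrow>real). (\<forall>i<n. a \<le> c i \<and> c i \<le> dd i \<and> dd i \<le> b) \<and>
        (\<forall>i<n. \<forall>j<n. i \<noteq> j \<longrightarrow> dd i \<le> c j \<or> dd j \<le> c i) \<and>
        (\<Sum>i<n. dd i - c i) < d \<longrightarrow> (\<Sum>i<n. norm (f (dd i) - f (c i))) < \<epsilon>)"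
    unfolding abs_continuous_on_def .
  then have "e > 0 \<longrightarrow> (\<exists>d>0. \<forall>(n::nat) (c::nat\<Rightarrow>real) (dd::nat\<Rightarrow>real). (\<forall>i<n. a \<le> c i \<and> c i \<le> dd i \<and> dd i \<le> b) \<and>
        (\<forall>i<n. \<forall>j<n. i \<noteq> j \<longrightarrow> dd i \<le> c j \<or> dd j \<le> c i) \<and>
        (\<Sum>i<n. dd i - c i) < d \<longrightarrow> (\<Sum>i<n. norm (f (dd i) - f (c i))) < e)"
    by (rule spec)
  then show ?thesis using assms(2) by (rule mp)
qed

lemma ac_cont:
  assumes "abs_continuous_on a b f"
  shows "continuous_on {a..b} f"
  unfolding continuous_on_iff
proof (intro ballI allI impI)
  fix x e :: real assume x: "x \<in> {a..b}" and e: "0 < e"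
  obtain d where d: "d > 0" and H: "\<forall>(n::nat) (c::nat\<Rightarrow>real) (dd::nat\<Rightarrow>real). (\<forall>i<n. a \<le> c i \<and> c i \<le> dd i \<and> dd i \<le> b) \<and>
        (\<forall>i<n. \<forall>j<n. i \<noteq> j \<longrightarrow> dd i \<le> c j \<or> dd j \<le> c i) \<and>
        (\<Sum>i<n. dd i - c i) < d \<longrightarrow> (\<Sum>i<n. norm (f (dd i) - f (c i))) < e"
    using acD[OF assms e] by (elim exE conjE)
  show "\<exists>d>0. \<forall>x'\<in>{a..b}. dist x' x < d \<longrightarrow> dist (f x') (f x) < e"
  proof (intro exI[of _ d] conjI ballI impI)
    fix x' assume x': "x' \<in> {a..b}" and dx: "dist x' x < d"
    have "(\<Sum>i<(1::nat). norm (f ((\<lambda>_. max x x') i) - f ((\<lambda>_. min x x') i))) < e"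
    proof -
      have m: "max x x' - min x x' < d" using dx by (auto simp: dist_real_def max_def min_def)
      show ?thesis
      using H[rule_format, of 1 "\<lambda>_. min x x'" "\<lambda>_. max x x'"] x x' m by auto
    qed
    then show "dist (f x') (f x) < e"
      by (cases "x \<le> x'") (auto simp: dist_norm norm_minus_commute max_def min_def)
  qed (use d in auto)
qed

lemma acI:
  assumes "\<And>e. e > 0 \<Longrightarrow> \<exists>d>0. \<forall>(n::nat) (c::nat\<Rightarrow>real) (dd::nat\<Rightarrow>real). (\<forall>i<n. a \<le> c i \<and> c i \<le> dd i \<and> dd i \<le> b) \<and>
        (\<forall>i<n. \<forall>j<n. i \<noteq> j \<longrightarrow> dd i \<le> c j \<or> dd j \<le> c i) \<and>
        (\<Sum>i<n. dd i - c i) < d \<longrightarrow> (\<Sum>i<n. norm (f (dd i) - f (c i))) < e"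
  shows "abs_continuous_on a b f"
  unfolding abs_continuous_on_def using assms by blast

lemma ac_bound:
  fixes g :: "real \<Rightarrow> 'b::real_normed_vector"
  assumes ac: "abs_continuous_on a b f" and L: "L \<ge> 0"
    and le: "\<And>s t. s \<in> {a..b} \<Longrightarrow> t \<in> {a..b} \<Longrightarrow> norm (g s - g t) \<le> L * norm (f s - f t)"
  shows "abs_continuous_on a b g"
proof (rule acI)
  fix e :: real assume e: "e > 0"
  then have e': "e / (L + 1) > 0" using L by auto
  obtain d where d: "d > 0" and H: "\<forall>(n::nat) (c::nat\<Rightarrow>real) (dd::nat\<Rightarrow>real). (\<forall>i<n. a \<le> c i \<and> c i \<le> dd i \<and> dd i \<le> b) \<and>
        (\<forall>i<n. \<forall>j<n. i \<noteq> j \<longrightarrow> dd i \<le> c j \<or> dd j \<le> c i) \<and>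
        (\<Sum>i<n. dd i - c i) < d \<longrightarrow> (\<Sum>i<n. norm (f (dd i) - f (c i))) < e / (L + 1)"
    using acD[OF ac e'] by (elim exE conjE)
  show "\<exists>d>0. \<forall>(n::nat) (c::nat\<Rightarrow>real) (dd::nat\<Rightarrow>real). (\<forall>i<n. a \<le> c i \<and> c i \<le> dd i \<and> dd i \<le> b) \<and>
        (\<forall>i<n. \<forall>j<n. i \<noteq> j \<longrightarrow> dd i \<le> c j \<or> dd j \<le> c i) \<and>
        (\<Sum>i<n. dd i - c i) < d \<longrightarrow> (\<Sum>i<n. norm (g (dd i) - g (c i))) < e"
  proof (intro exI[of _ d] conjI allI impI)
    fix n :: nat and c dd :: "nat \<Rightarrow> real"
    assume A: "(\<forall>i<n. a \<le> c i \<and> c i \<le> dd i \<and> dd i \<le> b) \<and>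
        (\<forall>i<n. \<forall>j<n. i \<noteq> j \<longrightarrow> dd i \<le> c j \<or> dd j \<le> c i) \<and>
        (\<Sum>i<n. dd i - c i) < d"
    have S: "(\<Sum>i<n. norm (f (dd i) - f (c i))) < e / (L + 1)" using H A by blast
    have "(\<Sum>i<n. norm (g (dd i) - g (c i))) \<le> (\<Sum>i<n. L * norm (f (dd i) - f (c i)))"
      by (rule sum_mono) (use A in \<open>auto intro!: le\<close>)
    also have "\<dots> = L * (\<Sum>i<n. norm (f (dd i) - f (c i)))" by (simp add: sum_distrib_left)
    also have "\<dots> \<le> L * (e / (L + 1))" using S L by (intro mult_left_mono) auto
    also have "\<dots> < e" using L e by (simp add: field_simps)
    finally show "(\<Sum>i<n. norm (g (dd i) - g (c i))) < e" .
  qed (use d in auto)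
qed

lemma norm_fst_le': "norm (fst p) \<le> norm p" by (metis norm_fst_le prod.collapse)
lemma norm_snd_le': "norm (snd p) \<le> norm p" by (metis norm_snd_le prod.collapse)

lemma ac_fst: "abs_continuous_on a b f \<Longrightarrow> abs_continuous_on a b (\<lambda>t. fst (f t))"
  by (rule ac_bound[where L=1]) (auto simp flip: fst_diff intro: norm_fst_le')

lemma ac_snd: "abs_continuous_on a b f \<Longrightarrow> abs_continuous_on a b (\<lambda>t. snd (f t))"
  by (rule ac_bound[where L=1]) (auto simp flip: snd_diff intro: norm_snd_le')

lemma ac_cmult:
  fixes f :: "real \<Rightarrow> real"
  shows "abs_continuous_on a b f \<Longrightarrow> abs_continuous_on a b (\<lambda>t. k * f t)"
  by (rule ac_bound[where L="\<bar>k\<bar>"]) (auto simp flip: right_diff_distrib simp: abs_mult)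

lemma ac_sub:
  assumes "abs_continuous_on a b f" "a \<le> a'" "b' \<le> b"
  shows "abs_continuous_on a' b' f"
proof (rule acI)
  fix e :: real assume e: "e > 0"
  obtain d where d: "d > 0" and H: "\<forall>(n::nat) (c::nat\<Rightarrow>real) (dd::nat\<Rightarrow>real). (\<forall>i<n. a \<le> c i \<and> c i \<le> dd i \<and> dd i \<le> b) \<and>
        (\<forall>i<n. \<forall>j<n. i \<noteq> j \<longrightarrow> dd i \<le> c j \<or> dd j \<le> c i) \<and>
        (\<Sum>i<n. dd i - c i) < d \<longrightarrow> (\<Sum>i<n. norm (f (dd i) - f (c i))) < e"
    using acD[OF assms(1) e] by (elim exE conjE)
  show "\<exists>d>0. \<forall>(n::nat) (c::nat\<Rightarrow>real) (dd::nat\<Rightarrow>real). (\<forall>i<n. a' \<le> c i \<and> c i \<le> dd i \<and> dd i \<le> b') \<and>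
        (\<forall>i<n. \<forall>j<n. i \<noteq> j \<longrightarrow> dd i \<le> c j \<or> dd j \<le> c i) \<and>
        (\<Sum>i<n. dd i - c i) < d \<longrightarrow> (\<Sum>i<n. norm (f (dd i) - f (c i))) < e"
  proof (intro exI[of _ d] conjI allI impI)
    fix n :: nat and c dd :: "nat \<Rightarrow> real"
    assume A: "(\<forall>i<n. a' \<le> c i \<and> c i \<le> dd i \<and> dd i \<le> b') \<and>
        (\<forall>i<n. \<forall>j<n. i \<noteq> j \<longrightarrow> dd i \<le> c j \<or> dd j \<le> c i) \<and>
        (\<Sum>i<n. dd i - c i) < d"
    have "(\<forall>i<n. a \<le> c i \<and> c i \<le> dd i \<and> dd i \<le> b)"
      using A assms(2,3) by force
    then show "(\<Sum>i<n. norm (f (dd i) - f (c i))) < e" using H A by blast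
  qed (use d in auto)
qed

lemma ac_add:
  fixes f g :: "real \<Rightarrow> real"
  assumes af: "abs_continuous_on a b f" and ag: "abs_continuous_on a b g"
  shows "abs_continuous_on a b (\<lambda>t. f t + g t)"
proof (rule acI)
  fix e :: real assume e: "e > 0"
  then have e2: "e/2 > 0" by simp
  obtain d1 where d1: "d1 > 0" and H1: "\<forall>(n::nat) (c::nat\<Rightarrow>real) (dd::nat\<Rightarrow>real). (\<forall>i<n. a \<le> c i \<and> c i \<le> dd i \<and> dd i \<le> b) \<and>
        (\<forall>i<n. \<forall>j<n. i \<noteq> j \<longrightarrow> dd i \<le> c j \<or> dd j \<le> c i) \<and>
        (\<Sum>i<n. dd i - c i) < d1 \<longrightarrow> (\<Sum>i<n. norm (f (dd i) - f (c i))) < e/2"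
    using acD[OF af e2] by (elim exE conjE)
  obtain d2 where d2: "d2 > 0" and H2: "\<forall>(n::nat) (c::nat\<Rightarrow>real) (dd::nat\<Rightarrow>real). (\<forall>i<n. a \<le> c i \<and> c i \<le> dd i \<and> dd i \<le> b) \<and>
        (\<forall>i<n. \<forall>j<n. i \<noteq> j \<longrightarrow> dd i \<le> c j \<or> dd j \<le> c i) \<and>
        (\<Sum>i<n. dd i - c i) < d2 \<longrightarrow> (\<Sum>i<n. norm (g (dd i) - g (c i))) < e/2"
    using acD[OF ag e2] by (elim exE conjE)
  show "\<exists>d>0. \<forall>(n::nat) (c::nat\<Rightarrow>real) (dd::nat\<Rightarrow>real). (\<forall>i<n. a \<le> c i \<and> c i \<le> dd i \<and> dd i \<le> b) \<and>
        (\<forall>i<n. \<forall>j<n. i \<noteq> j \<longrightarrow> dd i \<le> c j \<or> dd j \<le> c i) \<and>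
        (\<Sum>i<n. dd i - c i) < d \<longrightarrow> (\<Sum>i<n. norm ((f (dd i) + g (dd i)) - (f (c i) + g (c i)))) < e"
  proof (intro exI[of _ "min d1 d2"] conjI allI impI)
    fix n :: nat and c dd :: "nat \<Rightarrow> real"
    assume A: "(\<forall>i<n. a \<le> c i \<and> c i \<le> dd i \<and> dd i \<le> b) \<and>
        (\<forall>i<n. \<forall>j<n. i \<noteq> j \<longrightarrow> dd i \<le> c j \<or> dd j \<le> c i) \<and>
        (\<Sum>i<n. dd i - c i) < min d1 d2"
    have S1: "(\<Sum>i<n. norm (f (dd i) - f (c i))) < e/2" using H1 A by auto
    have S2: "(\<Sum>i<n. norm (g (dd i) - g (c i))) < e/2" using H2 A by auto
    have "(\<Sum>i<n. norm ((f (dd i) + g (dd i)) - (f (c i) + g (c i)))) \<le>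
       (\<Sum>i<n. norm (f (dd i) - f (c i)) + norm (g (dd i) - g (c i)))"
      by (rule sum_mono) (simp add: abs_triangle_ineq[THEN order_trans[rotated]] del: real_norm_def, simp)
    also have "\<dots> < e" using S1 S2 by (simp add: sum.distrib)
    finally show "(\<Sum>i<n. norm ((f (dd i) + g (dd i)) - (f (c i) + g (c i)))) < e" .
  qed (use d1 d2 in auto)
qed

lemma ac_id: "abs_continuous_on a b (\<lambda>t::real. t)"
proof (rule acI)
  fix e :: real assume e: "e > 0"
  show "\<exists>d>0. \<forall>(n::nat) (c::nat\<Rightarrow>real) (dd::nat\<Rightarrow>real). (\<forall>i<n. a \<le> c i \<and> c i \<le> dd i \<and> dd i \<le> b) \<and>
        (\<forall>i<n. \<forall>j<n. i \<noteq> j \<longrightarrow> dd i \<le> c j \<or> dd j \<le> c i) \<and>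
        (\<Sum>i<n. dd i - c i) < d \<longrightarrow> (\<Sum>i<n. norm (dd i - c i)) < e"
  proof (intro exI[of _ e] conjI allI impI)
    fix n :: nat and c dd :: "nat \<Rightarrow> real"
    assume A: "(\<forall>i<n. a \<le> c i \<and> c i \<le> dd i \<and> dd i \<le> b) \<and>
        (\<forall>i<n. \<forall>j<n. i \<noteq> j \<longrightarrow> dd i \<le> c j \<or> dd j \<le> c i) \<and>
        (\<Sum>i<n. dd i - c i) < e"
    have "(\<Sum>i<n. norm (dd i - c i)) = (\<Sum>i<n. dd i - c i)"
      by (rule sum.cong) (use A in auto)
    then show "(\<Sum>i<n. norm (dd i - c i)) < e" using A by simp
  qed (use e in auto)
qed

lemma ac_deriv0_const:
  fixes f :: "real \<Rightarrow> real"
  assumes ac: "abs_continuous_on a b f" and ab: "a \<le> b"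
    and der: "AE t in lborel. t \<in> {a<..<b} \<longrightarrow> (f has_real_derivative 0) (at t)"
  shows "f b = f a"
proof -
  have cont: "continuous_on {a..b} f" by (rule ac_cont[OF ac])
  from der obtain N where N: "N \<in> null_sets lborel"
     and Nsub: "{t. \<not> (t \<in> {a<..<b} \<longrightarrow> (f has_real_derivative 0) (at t))} \<subseteq> N"
    by (auto simp: eventually_ae_filter)
  define N' where "N' = N \<union> {a,b}"
  have N'null: "N' \<in> null_sets lebesgue"
    unfolding N'_def using N by (auto intro!: null_sets_completionI finite_imp_null_set_lborel)
  have good: "\<And>t. t \<in> {a<..<b} \<Longrightarrow> t \<notin> N' \<Longrightarrow> (f has_real_derivative 0) (at t)"
    using Nsub unfolding N'_def by auto
  have main: "\<bar>f b - f a\<bar> \<le> \<epsilon> * (b - a) + \<epsilon>" if eps: "\<epsilon> > 0" for \<epsilon>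
  proof -
    obtain \<delta> where \<delta>: "\<delta> > 0" and H: "\<forall>(n::nat) (c::nat\<Rightarrow>real) (dd::nat\<Rightarrow>real). (\<forall>i<n. a \<le> c i \<and> c i \<le> dd i \<and> dd i \<le> b) \<and>
        (\<forall>i<n. \<forall>j<n. i \<noteq> j \<longrightarrow> dd i \<le> c j \<or> dd j \<le> c i) \<and>
        (\<Sum>i<n. dd i - c i) < \<delta> \<longrightarrow> (\<Sum>i<n. norm (f (dd i) - f (c i))) < \<epsilon>"
      using acD[OF ac eps] by (elim exE conjE)
    obtain U where U: "open U" "N' \<subseteq> U" "(U - N') \<in> lmeasurable"
        "emeasure lebesgue (U - N') < ennreal \<delta>"
      using sets_lebesgue_outer_open[of N' \<delta>] N'null \<delta> by blast
    have Ueq: "U = (U - N') \<union> N'" using U(2) by blast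
    have N'lm: "N' \<in> lmeasurable" using N'null
      by (simp add: fmeasurable_def null_setsD1 null_setsD2)
    have Ulm: "U \<in> lmeasurable" using U(3) N'lm Ueq by (metis fmeasurable.Un)
    have mU: "measure lebesgue U < \<delta>"
    proof -
      have "measure lebesgue U = measure lebesgue (U - N')"
        using Ueq measure_Un_null_set[of "U - N'" lebesgue N'] U(3) N'null by auto
      moreover have "ennreal (measure lebesgue (U - N')) < ennreal \<delta>"
        using U(3,4) by (simp add: emeasure_eq_measure2)
      ultimately show ?thesis by (simp add: ennreal_less_iff)
    qed
    have Ulen: "(\<Sum>i<n. dd i - c i) < \<delta>"
      if A1: "\<forall>i<n. c i \<le> dd i \<and> {c i..dd i} \<subseteq> U"
        and A2: "\<forall>i<n. \<forall>j<n. i \<noteq> j \<longrightarrow> dd i \<le> c j \<or> dd j \<le> c i"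
      for n :: nat and c dd :: "nat \<Rightarrow> real"
    proof -
      have "(\<Sum>i<n. dd i - c i) = (\<Sum>i<n. measure lebesgue {c i<..<dd i})"
        by (rule sum.cong) (use A1 in auto)
      also have "\<dots> = measure lebesgue (\<Union>i<n. {c i<..<dd i})"
      proof (rule measure_finite_Union[symmetric])
        show "disjoint_family_on (\<lambda>i. {c i<..<dd i}) {..<n}"
          unfolding disjoint_family_on_def
        proof (intro ballI impI)
          fix i j assume "i \<in> {..<n}" "j \<in> {..<n}" "i \<noteq> j"
          then have "dd i \<le> c j \<or> dd j \<le> c i" using A2 by auto
          then show "{c i<..<dd i} \<inter> {c j<..<dd j} = {}" by auto
        qed
        show "emeasure lebesgue {c i<..<dd i} \<noteq> \<infinity>" if "i \<in> {..<n}" for i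
        proof -
          have "c i \<le> dd i" using A1 that by blast
          then show ?thesis by simp
        qed
        show "finite {..<n}" by simp
        show "(\<lambda>i. {c i<..<dd i}) ` {..<n} \<subseteq> sets lebesgue" by auto
      qed
      also have "\<dots> \<le> measure lebesgue U"
        by (rule measure_mono_fmeasurable) (use A1 Ulm in \<open>auto simp: subset_eq\<close>)
      also have "\<dots> < \<delta>" by (rule mU)
      finally show ?thesis .
    qed
    define fam where "fam t = {(\<Sum>i<n. \<bar>f (dd i) - f (c i)\<bar>) | (n::nat) (c::nat\<Rightarrow>real) (dd::nat\<Rightarrow>real).
        (\<forall>i<n. a \<le> c i \<and> c i \<le> dd i \<and> dd i \<le> t \<and> {c i..dd i} \<subseteq> U) \<and>
        (\<forall>i<n. \<forall>j<n. i \<noteq> j \<longrightarrow> dd i \<le> c j \<or> dd j \<le> c i)}" for t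
    define V where "V t = Sup (fam t)" for t
    have fam0: "0 \<in> fam t" for t
      unfolding fam_def by (rule CollectI, rule exI[of _ 0]) auto
    have famb: "x < \<epsilon>" if "t \<le> b" "x \<in> fam t" for t x
    proof -
      from that(2) obtain n c dd where x: "x = (\<Sum>i<(n::nat). \<bar>f (dd i) - f (c i)\<bar>)"
        and C1: "\<forall>i<n. a \<le> c i \<and> c i \<le> dd i \<and> dd i \<le> t \<and> {c i..dd i} \<subseteq> U"
        and C2: "\<forall>i<n. \<forall>j<n. i \<noteq> j \<longrightarrow> dd i \<le> c j \<or> dd j \<le> c i"
        unfolding fam_def by blast
      have "(\<Sum>i<n. dd i - c i) < \<delta>" by (rule Ulen) (use C1 C2 in auto)
      moreover have "\<forall>i<n. a \<le> c i \<and> c i \<le> dd i \<and> dd i \<le> b" using C1 that(1) by force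
      ultimately show ?thesis using H C2 x by auto
    qed
    have bdd: "bdd_above (fam t)" if "t \<le> b" for t
      using famb[OF that] by (meson bdd_above.I less_imp_le)
    have V0: "0 \<le> V t" if "t \<le> b" for t
      unfolding V_def by (rule cSup_upper[OF fam0 bdd[OF that]])
    have Vle: "V t \<le> \<epsilon>" if "t \<le> b" for t
      unfolding V_def by (rule cSup_least) (use fam0 famb[OF that] in \<open>auto intro: less_imp_le\<close>)
    have Vmono: "V t \<le> V t'" if Ht: "t \<le> t'" "t' \<le> b" for t t'
      unfolding V_def
    proof (rule cSup_subset_mono)
      show "fam t \<subseteq> fam t'"
      proof
        fix x assume "x \<in> fam t"
        then obtain n c dd where x: "x = (\<Sum>i<(n::nat). \<bar>f (dd i) - f (c i)\<bar>)"
          and C1: "\<forall>i<n. a \<le> c i \<and> c i \<le> dd i \<and> dd i \<le> t \<and> {c i..dd i} \<subseteq> U"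
          and C2: "\<forall>i<n. \<forall>j<n. i \<noteq> j \<longrightarrow> dd i \<le> c j \<or> dd j \<le> c i"
          unfolding fam_def by blast
        have C1': "\<forall>i<n. a \<le> c i \<and> c i \<le> dd i \<and> dd i \<le> t' \<and> {c i..dd i} \<subseteq> U"
          using C1 Ht(1) by (meson order_trans)
        show "x \<in> fam t'" unfolding fam_def
          by (rule CollectI, rule exI[of _ n], rule exI[of _ c], rule exI[of _ dd]) (use x C1' C2 in blast)
      qed
    qed (use fam0 bdd[OF Ht(2)] in auto)
    have Vsup: "V t + \<bar>f s - f t\<bar> \<le> V s" if "a \<le> t" "t \<le> s" "s \<le> b" "{t..s} \<subseteq> U" for t s
    proof -
      have "V t \<le> V s - \<bar>f s - f t\<bar>"
        unfolding V_def[of t]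
      proof (rule cSup_least)
        show "fam t \<noteq> {}" using fam0 by auto
        fix x assume "x \<in> fam t"
        then obtain n c dd where x: "x = (\<Sum>i<(n::nat). \<bar>f (dd i) - f (c i)\<bar>)"
          and C1: "\<forall>i<n. a \<le> c i \<and> c i \<le> dd i \<and> dd i \<le> t \<and> {c i..dd i} \<subseteq> U"
          and C2: "\<forall>i<n. \<forall>j<n. i \<noteq> j \<longrightarrow> dd i \<le> c j \<or> dd j \<le> c i"
          unfolding fam_def by blast
        define c' where "c' = c(n := t)"
        define dd' where "dd' = dd(n := s)"
        have "(\<Sum>i<Suc n. \<bar>f (dd' i) - f (c' i)\<bar>) = x + \<bar>f s - f t\<bar>"
          unfolding x sum.lessThan_Suc by (simp add: c'_def dd'_def)
        moreover have "(\<Sum>i<Suc n. \<bar>f (dd' i) - f (c' i)\<bar>) \<in> fam s"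
          unfolding fam_def
        proof (rule CollectI, intro exI conjI)
          show "\<forall>i<Suc n. a \<le> c' i \<and> c' i \<le> dd' i \<and> dd' i \<le> s \<and> {c' i..dd' i} \<subseteq> U"
            using C1 that unfolding c'_def dd'_def by (auto simp: less_Suc_eq)
          show "\<forall>i<Suc n. \<forall>j<Suc n. i \<noteq> j \<longrightarrow> dd' i \<le> c' j \<or> dd' j \<le> c' i"
            using C1 C2 unfolding c'_def dd'_def by (auto simp: less_Suc_eq)
        qed (rule refl)
        ultimately have "x + \<bar>f s - f t\<bar> \<le> V s"
          unfolding V_def by (metis cSup_upper bdd that(3))
        then show "x \<le> V s - \<bar>f s - f t\<bar>" by simp
      qed
      then show ?thesis by simp
    qed
    define Q where "Q t \<longleftrightarrow> \<bar>f t - f a\<bar> \<le> \<epsilon> * (t - a) + V t" for t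
    define S where "S = {t \<in> {a..b}. \<forall>s\<in>{a..t}. Q s}"
    have Qa: "Q a" unfolding Q_def using V0[OF ab] by simp
    have aS: "a \<in> S" unfolding S_def using ab Qa by auto
    have bddS: "bdd_above S" unfolding S_def by (rule bdd_aboveI[of _ b]) auto
    define m where "m = Sup S"
    have am: "a \<le> m" unfolding m_def by (rule cSup_upper[OF aS bddS])
    have mb: "m \<le> b" unfolding m_def by (rule cSup_least) (use aS S_def in auto)
    have Qbelow: "Q s" if Hs: "a \<le> s" "s < m" for s
    proof -
      obtain t where "t \<in> S" "s < t" using less_cSupD[of S s] aS Hs(2) unfolding m_def by blast
      then show ?thesis using Hs unfolding S_def by auto
    qed
    have Qm: "Q m"
    proof (cases "m = a")
      case True then show ?thesis using Qa by simp
    next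
      case False
      then have am': "a < m" using am by simp
      have c1: "continuous_on {a..m} (\<lambda>s. \<bar>f s - f a\<bar>)"
        by (intro continuous_intros continuous_on_subset[OF cont]) (use mb in auto)
      have lim: "((\<lambda>s. \<bar>f s - f a\<bar>) \<longlongrightarrow> \<bar>f m - f a\<bar>) (at_left m)"
        using continuous_on_Icc_at_leftD[OF c1 am'] .
      have ev: "eventually (\<lambda>s. \<bar>f s - f a\<bar> \<le> \<epsilon> * (m - a) + V m) (at_left m)"
        using eventually_at_left_real[OF am']
      proof eventually_elim
        case (elim s)
        then have "Q s" using Qbelow by auto
        moreover have "\<epsilon> * (s - a) \<le> \<epsilon> * (m - a)" using elim eps by auto
        moreover have "V s \<le> V m" using Vmono[of s m] elim mb by auto
        ultimately show ?case unfolding Q_def by linarith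
      qed
      have "\<bar>f m - f a\<bar> \<le> \<epsilon> * (m - a) + V m"
        by (rule tendsto_upperbound[OF lim ev]) simp
      then show ?thesis unfolding Q_def .
    qed
    have mS: "m \<in> S" unfolding S_def using am mb Qm Qbelow by force
    have "m = b"
    proof (rule ccontr)
      assume "m \<noteq> b"
      then have mb': "m < b" using mb by simp
      have "\<exists>h>0. m + h \<le> b \<and> (\<forall>s\<in>{m<..m+h}. Q s)"
      proof (cases "m \<in> N'")
        case True
        then have "m \<in> U" using U(2) by auto
        then obtain r where r: "r > 0" "ball m r \<subseteq> U" using U(1) open_contains_ball by blast
        show ?thesis
        proof (intro exI[of _ "min (r/2) (b - m)"] conjI ballI)
          fix s assume s: "s \<in> {m<..m + min (r / 2) (b - m)}"
          have sub: "{m..s} \<subseteq> U"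
            using r s by (auto simp: dist_real_def subset_eq)
          have "V m + \<bar>f s - f m\<bar> \<le> V s" by (rule Vsup) (use am s sub in auto)
          moreover have "\<bar>f s - f a\<bar> \<le> \<bar>f m - f a\<bar> + \<bar>f s - f m\<bar>" by linarith
          moreover have "\<epsilon> * (m - a) \<le> \<epsilon> * (s - a)" using s eps by auto
          ultimately show "Q s" using Qm unfolding Q_def by linarith
        qed (use r mb' in auto)
      next
        case False
        then have mab: "m \<in> {a<..<b}" using am mb' unfolding N'_def by auto
        have "(f has_real_derivative 0) (at m)" by (rule good[OF mab False])
        then have "(f has_derivative (*) 0) (at m)"
          by (simp add: has_field_derivative_def)
        then obtain r where r: "r > 0" and R: "\<forall>y. norm (y - m) < r \<longrightarrow>
             norm (f y - f m - 0 * (y - m)) \<le> \<epsilon> * norm (y - m)"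
          using eps unfolding has_derivative_at_alt by blast
        show ?thesis
        proof (intro exI[of _ "min (r/2) (b - m)"] conjI ballI)
          fix s assume s: "s \<in> {m<..m + min (r / 2) (b - m)}"
          have "\<bar>f s - f m\<bar> \<le> \<epsilon> * (s - m)" using R[rule_format, of s] r s by auto
          moreover have "V m \<le> V s" using Vmono[of m s] s by auto
          ultimately show "Q s" using Qm unfolding Q_def by (auto simp: algebra_simps)
        qed (use r mb' in auto)
      qed
      then obtain h where h: "h > 0" "m + h \<le> b" "\<forall>s\<in>{m<..m+h}. Q s" by blast
      have "m + h \<in> S" unfolding S_def using h mS am unfolding S_def
        by (auto simp: not_le)
      then have "m + h \<le> m" unfolding m_def by (rule cSup_upper[OF _ bddS])
      then show False using h by simp
    qed
    then have "Q b" using Qm by simp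
    then show ?thesis unfolding Q_def using Vle[of b] by simp
  qed
  show ?thesis
  proof (rule ccontr)
    assume ne: "f b \<noteq> f a"
    define D where "D = \<bar>f b - f a\<bar>"
    have D: "D > 0" using ne unfolding D_def by simp
    define \<epsilon> where "\<epsilon> = D / (2 * (b - a + 1))"
    have e: "\<epsilon> > 0" unfolding \<epsilon>_def using D ab by simp
    have gen: "\<And>k::real. k > 0 \<Longrightarrow> D / (2 * k) * k = D / 2" by (simp add: field_simps)
    have "\<epsilon> * (b - a) + \<epsilon> = \<epsilon> * (b - a + 1)" by (simp add: algebra_simps)
    also have "\<dots> = D / 2" unfolding \<epsilon>_def using ab by (intro gen) simp
    finally have "\<epsilon> * (b - a) + \<epsilon> = D / 2" .
    moreover have "D \<le> \<epsilon> * (b - a) + \<epsilon>" using main[OF e] unfolding D_def .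
    ultimately show False using D by linarith
  qed
qed

lemma ac_deriv_affine:
  fixes f :: "real \<Rightarrow> real"
  assumes ac: "abs_continuous_on a b f" and ab: "a \<le> b"
    and der: "AE t in lborel. t \<in> {a<..<b} \<longrightarrow> (f has_real_derivative k) (at t)"
    and t: "t \<in> {a..b}"
  shows "f t = f a + k * (t - a)"
proof -
  define g where "g s = f s + (- k) * s" for s
  have acg: "abs_continuous_on a t g"
    unfolding g_def
    by (rule ac_add[OF ac_sub[OF ac] ac_cmult[OF ac_id]]) (use t in auto)
  have derg: "AE s in lborel. s \<in> {a<..<t} \<longrightarrow> (g has_real_derivative 0) (at s)"
    using der
  proof eventually_elim
    case (elim s)
    show ?case
    proof
      assume s: "s \<in> {a<..<t}"
      then have fd: "(f has_real_derivative k) (at s)" using elim t by auto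
      have d2: "((\<lambda>s. (- k) * s) has_real_derivative (- k)) (at s)"
        by (rule DERIV_cmult_Id)
      have "(g has_real_derivative (k + (- k))) (at s)"
        unfolding g_def by (rule DERIV_add[OF fd d2])
      then show "(g has_real_derivative 0) (at s)" by simp
    qed
  qed
  have "g t = g a" by (rule ac_deriv0_const[OF acg _ derg]) (use t in auto)
  then show ?thesis unfolding g_def by (simp add: algebra_simps)
qed

lemma AE_interval_exists:
  fixes \<alpha> \<beta> :: real
  assumes ae: "AE t in lborel. t \<in> {\<alpha><..<\<beta>} \<longrightarrow> P t" and ab: "\<alpha> < \<beta>"
  shows "\<exists>t\<in>{\<alpha><..<\<beta>}. P t"
proof (rule ccontr)
  assume "\<not> (\<exists>t\<in>{\<alpha><..<\<beta>}. P t)"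
  then have sub: "{\<alpha><..<\<beta>} \<subseteq> {t. \<not> (t \<in> {\<alpha><..<\<beta>} \<longrightarrow> P t)}" by auto
  from ae obtain N where N: "N \<in> null_sets lborel" "{t. \<not> (t \<in> {\<alpha><..<\<beta>} \<longrightarrow> P t)} \<subseteq> N"
    by (auto simp: eventually_ae_filter)
  have "{\<alpha><..<\<beta>} \<in> null_sets lborel"
    by (rule null_sets_subset[OF N(1)]) (use sub N(2) in auto)
  then have "emeasure lborel {\<alpha><..<\<beta>} = 0" by auto
  then show False using ab by simp
qed

lemma AE_mono_interval:
  assumes "AE t in lborel. t \<in> A \<longrightarrow> P t" "B \<subseteq> A"
  shows "AE t in lborel. t \<in> B \<longrightarrow> P t"
  using assms(1)
proof eventually_elim
  case (elim t)
  then show ?case using assms(2) by auto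
qed

lemma nonzero_nbhd:
  fixes f :: "real \<Rightarrow> real"
  assumes "continuous_on S f" "x \<in> S" "f x \<noteq> 0"
  shows "\<exists>r>0. \<forall>t\<in>S. \<bar>t - x\<bar> < r \<longrightarrow> f t \<noteq> 0 \<and> sgn (f t) = sgn (f x)"
proof -
  have e: "\<bar>f x\<bar> > 0" using assms(3) by simp
  obtain r where r: "r > 0" "\<forall>t\<in>S. dist t x < r \<longrightarrow> dist (f t) (f x) < \<bar>f x\<bar>"
    using assms(1) assms(2) e unfolding continuous_on_iff by blast
  have "\<forall>t\<in>S. \<bar>t - x\<bar> < r \<longrightarrow> f t \<noteq> 0 \<and> sgn (f t) = sgn (f x)"
  proof (intro ballI impI)
    fix t assume "t \<in> S" "\<bar>t - x\<bar> < r"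
    then have "\<bar>f t - f x\<bar> < \<bar>f x\<bar>" using r by (auto simp: dist_real_def)
    then show "f t \<noteq> 0 \<and> sgn (f t) = sgn (f x)"
      by (cases "f x > 0") (auto simp: sgn_if split: if_splits)
  qed
  then show ?thesis using r(1) by blast
qed

lemma AE_eq_cont:
  fixes g :: "real \<Rightarrow> real"
  assumes cont: "continuous_on {\<alpha>..\<beta>} g" and ab: "\<alpha> < \<beta>"
    and ae: "AE t in lborel. t \<in> {\<alpha>..\<beta>} \<longrightarrow> g t = c"
    and t0: "t0 \<in> {\<alpha>..\<beta>}"
  shows "g t0 = c"
proof (rule ccontr)
  assume ne: "g t0 \<noteq> c"
  have cont': "continuous_on {\<alpha>..\<beta>} (\<lambda>t. g t - c)" by (intro continuous_intros cont)
  have ne': "g t0 - c \<noteq> 0" using ne by simp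
  obtain r where r0: "r > 0" and r1: "\<forall>t\<in>{\<alpha>..\<beta>}. \<bar>t - t0\<bar> < r \<longrightarrow> g t - c \<noteq> 0 \<and> sgn (g t - c) = sgn (g t0 - c)"
    using nonzero_nbhd[OF cont' t0 ne'] by blast
  have r: "r > 0" "\<forall>t\<in>{\<alpha>..\<beta>}. \<bar>t - t0\<bar> < r \<longrightarrow> g t - c \<noteq> 0"
    using r0 r1 by auto
  obtain c' d' where cd: "c' < d'" "{c'<..<d'} \<subseteq> {\<alpha>..\<beta>}" "\<forall>t\<in>{c'<..<d'}. \<bar>t - t0\<bar> < r"
  proof (cases "t0 < \<beta>")
    case True
    show ?thesis
      by (rule that[of t0 "min \<beta> (t0 + r/2)"]) (use True r t0 in auto)
  next
    case False
    then have "t0 = \<beta>" using t0 by auto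
    show ?thesis
      by (rule that[of "max \<alpha> (t0 - r/2)" t0]) (use \<open>t0 = \<beta>\<close> ab r t0 in auto)
  qed
  have ae2: "AE t in lborel. t \<in> {c'<..<d'} \<longrightarrow> g t = c"
    by (rule AE_mono_interval[OF ae cd(2)])
  obtain t where t1: "t \<in> {c'<..<d'}" and t2: "g t = c" using AE_interval_exists[OF ae2 cd(1)] by blast
  have "t \<in> {\<alpha>..\<beta>}" using cd(2) t1 by blast
  moreover have "\<bar>t - t0\<bar> < r" using cd(3) t1 by blast
  ultimately have "g t - c \<noteq> 0" using r(2) by blast
  then show False using t2 by simp
qed

lemma sign_const:
  fixes f :: "real \<Rightarrow> real"
  assumes cont: "continuous_on {\<alpha>..\<beta>} f" and nz: "\<forall>t\<in>{\<alpha><..<\<beta>}. f t \<noteq> 0"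
  shows "(\<forall>t\<in>{\<alpha><..<\<beta>}. f t > 0) \<or> (\<forall>t\<in>{\<alpha><..<\<beta>}. f t < 0)"
proof (rule ccontr)
  assume "\<not> ?thesis"
  then obtain s t where st: "s \<in> {\<alpha><..<\<beta>}" "t \<in> {\<alpha><..<\<beta>}" "f s > 0" "f t < 0"
    using nz by (meson linorder_neqE_linordered_idom)
  have c: "continuous_on {min s t..max s t} f"
    by (rule continuous_on_subset[OF cont]) (use st in auto)
  have "\<exists>x. min s t \<le> x \<and> x \<le> max s t \<and> f x = 0"
  proof (cases "s \<le> t")
    case True
    have c': "continuous_on {s..t} f" using c True by (simp add: min_def max_def)
    obtain x where "s \<le> x" "x \<le> t" "f x = 0"
      using IVT2'[where a=s and b=t and y=0 and f=f, OF _ _ True c'] st by force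
    then show ?thesis using True by (intro exI[of _ x]) (simp add: min_def max_def)
  next
    case False
    then have F: "t \<le> s" by simp
    have "min s t = t" "max s t = s" using F by auto
    then have c': "continuous_on {t..s} f" using c by simp
    obtain x where "t \<le> x" "x \<le> s" "f x = 0"
      using IVT'[where a=t and b=s and y=0 and f=f, OF _ _ F c'] st by force
    then show ?thesis using F by (intro exI[of _ x]) (simp add: min_def max_def)
  qed
  then obtain x where "min s t \<le> x" "x \<le> max s t" "f x = 0" by blast
  moreover have "x \<in> {\<alpha><..<\<beta>}" using calculation st by auto
  ultimately show False using nz by auto
qed

lemma dHdp_eq: "dHdp l P w = (fst w * snd l - snd w * snd l, 0)"
proof -
  have "((\<lambda>s. Ham l (s, snd P) w) has_real_derivative (fst w * snd l - snd w * snd l)) (at (fst P))"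
    unfolding Ham_def ucomp_def pairing_def Yfield_def
    by (auto intro!: derivative_eq_intros simp: algebra_simps)
  moreover have "((\<lambda>s. Ham l (fst P, s) w) has_real_derivative 0) (at (snd P))"
    unfolding Ham_def ucomp_def pairing_def Yfield_def
    by (auto intro!: derivative_eq_intros)
  ultimately show ?thesis unfolding dHdp_def by (simp add: DERIV_imp_deriv)
qed

lemma dHdl_eq: "dHdl l P w = (fst w + snd w, fst w * fst P - snd w * fst P)"
proof -
  have "((\<lambda>s. Ham (s, snd l) P w) has_real_derivative (fst w + snd w)) (at (fst l))"
    unfolding Ham_def ucomp_def pairing_def Yfield_def
    by (auto intro!: derivative_eq_intros simp: algebra_simps)
  moreover have "((\<lambda>s. Ham (fst l, s) P w) has_real_derivative (fst w * fst P - snd w * fst P)) (at (snd l))"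
    unfolding Ham_def ucomp_def pairing_def Yfield_def
    by (auto intro!: derivative_eq_intros simp: algebra_simps)
  ultimately show ?thesis unfolding dHdl_def by (simp add: DERIV_imp_deriv)
qed

lemma switching1: "switching lam \<gamma> 1 t = fst (lam t) + snd (lam t) * fst (\<gamma> t)"
  by (simp add: switching_def pairing_def Yfield_def)
lemma switching2: "switching lam \<gamma> 2 t = fst (lam t) - snd (lam t) * fst (\<gamma> t)"
  by (simp add: switching_def pairing_def Yfield_def)

lemma sum12: "(\<Sum>i\<in>{1::nat,2}. f i) = f 1 + f 2" by simp

lemma hvd_fst:
  assumes "(f has_vector_derivative v) F"
  shows "((\<lambda>s. fst (f s)) has_real_derivative fst v) F"
proof -
  have "((\<lambda>s. fst (f s)) has_derivative (\<lambda>h. fst (h *\<^sub>R v))) F"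
    using has_derivative_fst[OF assms[unfolded has_vector_derivative_def]] .
  moreover have "(\<lambda>h. fst (h *\<^sub>R v)) = (*) (fst v)" by (auto simp: fun_eq_iff)
  ultimately show ?thesis unfolding has_field_derivative_def by simp
qed

lemma hvd_snd:
  assumes "(f has_vector_derivative v) F"
  shows "((\<lambda>s. snd (f s)) has_real_derivative snd v) F"
proof -
  have "((\<lambda>s. snd (f s)) has_derivative (\<lambda>h. snd (h *\<^sub>R v))) F"
    using has_derivative_snd[OF assms[unfolded has_vector_derivative_def]] .
  moreover have "(\<lambda>h. snd (h *\<^sub>R v)) = (*) (snd v)" by (auto simp: fun_eq_iff)
  ultimately show ?thesis unfolding has_field_derivative_def by simp
qed

lemma max_split:
  fixes a b x y :: real
  assumes "\<bar>a\<bar> \<le> 1" "\<bar>b\<bar> \<le> 1" "a * x + b * y = \<bar>x\<bar> + \<bar>y\<bar>"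
  shows "a * x = \<bar>x\<bar> \<and> b * y = \<bar>y\<bar>"
proof -
  have "a * x \<le> \<bar>x\<bar>"
  proof -
    have "a * x \<le> \<bar>a * x\<bar>" by simp
    also have "\<dots> = \<bar>a\<bar> * \<bar>x\<bar>" by (simp add: abs_mult)
    also have "\<dots> \<le> 1 * \<bar>x\<bar>" using assms(1) by (intro mult_right_mono) auto
    finally show ?thesis by simp
  qed
  moreover have "b * y \<le> \<bar>y\<bar>"
  proof -
    have "b * y \<le> \<bar>b * y\<bar>" by simp
    also have "\<dots> = \<bar>b\<bar> * \<bar>y\<bar>" by (simp add: abs_mult)
    also have "\<dots> \<le> 1 * \<bar>y\<bar>" using assms(2) by (intro mult_right_mono) auto
    finally show ?thesis by simp
  qed
  ultimately show ?thesis using assms(3) by linarith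
qed

lemma mult_abs_sgn:
  fixes a x :: real
  assumes "a * x = \<bar>x\<bar>" "x \<noteq> 0"
  shows "a = sgn x"
proof (cases "x > 0")
  case True
  then have "a * x = 1 * x" using assms(1) by simp
  then show ?thesis using True by simp
next
  case False
  then have "x < 0" using assms(2) by simp
  then have "a * x = - x" using assms(1) by simp
  then have "(a + 1) * x = 0" by (simp add: algebra_simps)
  then have "a + 1 = 0" using \<open>x < 0\<close> by simp
  then show ?thesis using \<open>x < 0\<close> by simp
qed

locale setting =
  fixes T :: real and lam \<gamma> u :: "real \<Rightarrow> real \<times> real"
  assumes ext: "extremal_pair T lam \<gamma> u"
    and reg: "\<exists>a b. regular_arc T lam \<gamma> a b"
begin

definition phi :: "nat \<Rightarrow> real \<Rightarrow> real" where "phi i t = switching lam \<gamma> i t"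
definition si :: "nat \<Rightarrow> real" where "si i = (if i = 1 then 1 else -1)"
definition q0 :: real where "q0 = snd (lam 0)"
definition lam0 :: real where
  "lam0 = (SOME l. l \<ge> 0 \<and> (AE t in lborel. t \<in> {0..T} \<longrightarrow>
        (\<Sum>i\<in>{1,2}. ucomp i (u t) * pairing (lam t) (Yfield i (\<gamma> t))) =
          (\<Sum>i\<in>{1,2}. \<bar>pairing (lam t) (Yfield i (\<gamma> t))\<bar>) \<and>
        (\<Sum>i\<in>{1,2}. \<bar>pairing (lam t) (Yfield i (\<gamma> t))\<bar>) = l))"

lemma phi_eq: "phi i t = fst (lam t) + si i * snd (lam t) * fst (\<gamma> t)"
  by (simp add: phi_def si_def switching_def pairing_def Yfield_def)

lemma adm: "admissible T \<gamma> u" using ext unfolding extremal_pair_def by blast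
lemma aclam: "abs_continuous_on 0 T lam" using ext unfolding extremal_pair_def by blast
lemma acgam: "abs_continuous_on 0 T \<gamma>" using adm unfolding admissible_def by blast

lemma lam0_prop: "lam0 \<ge> 0 \<and> (AE t in lborel. t \<in> {0..T} \<longrightarrow>
        (\<Sum>i\<in>{1,2}. ucomp i (u t) * pairing (lam t) (Yfield i (\<gamma> t))) =
          (\<Sum>i\<in>{1,2}. \<bar>pairing (lam t) (Yfield i (\<gamma> t))\<bar>) \<and>
        (\<Sum>i\<in>{1,2}. \<bar>pairing (lam t) (Yfield i (\<gamma> t))\<bar>) = lam0)"
proof -
  have "\<exists>l. l \<ge> 0 \<and> (AE t in lborel. t \<in> {0..T} \<longrightarrow>
        (\<Sum>i\<in>{1,2}. ucomp i (u t) * pairing (lam t) (Yfield i (\<gamma> t))) =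
          (\<Sum>i\<in>{1,2}. \<bar>pairing (lam t) (Yfield i (\<gamma> t))\<bar>) \<and>
        (\<Sum>i\<in>{1,2}. \<bar>pairing (lam t) (Yfield i (\<gamma> t))\<bar>) = l)"
    using ext unfolding extremal_pair_def by blast
  then show ?thesis unfolding lam0_def by (rule someI_ex)
qed

lemma Tpos: "T > 0"
  using reg unfolding regular_arc_def regular_interval_def by auto

lemma cont_lam: "continuous_on {0..T} lam" by (rule ac_cont[OF aclam])
lemma cont_gam: "continuous_on {0..T} \<gamma>" by (rule ac_cont[OF acgam])

lemma cont_phi: "continuous_on {0..T} (phi i)"
proof -
  have "continuous_on {0..T} (\<lambda>t. fst (lam t) + si i * snd (lam t) * fst (\<gamma> t))"
    using cont_lam cont_gam by (intro continuous_intros)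
  then show ?thesis unfolding phi_eq[abs_def] .
qed

lemma Gfact: "AE t in lborel. t \<in> {0..T} \<longrightarrow>
  ((\<lambda>s. snd (lam s)) has_real_derivative 0) (at t) \<and>
  ((\<lambda>s. fst (lam s)) has_real_derivative - (fst (u t) * snd (lam t) - snd (u t) * snd (lam t))) (at t) \<and>
  ((\<lambda>s. fst (\<gamma> s)) has_real_derivative (fst (u t) + snd (u t))) (at t) \<and>
  \<bar>fst (u t)\<bar> \<le> 1 \<and> \<bar>snd (u t)\<bar> \<le> 1 \<and>
  fst (u t) * phi 1 t + snd (u t) * phi 2 t = \<bar>phi 1 t\<bar> + \<bar>phi 2 t\<bar> \<and>
  \<bar>phi 1 t\<bar> + \<bar>phi 2 t\<bar> = lam0"
proof -
  have A1: "AE t in lborel. t \<in> {0..T} \<longrightarrow>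
        (lam has_vector_derivative - dHdp (lam t) (\<gamma> t) (u t)) (at t) \<and>
        (\<gamma> has_vector_derivative dHdl (lam t) (\<gamma> t) (u t)) (at t)"
    using ext unfolding extremal_pair_def by blast
  have A2: "AE t in lborel. t \<in> {0..T} \<longrightarrow> (\<forall>i\<in>{1,2}. \<bar>ucomp i (u t)\<bar> \<le> 1)"
    using adm unfolding admissible_def by blast
  have A3: "AE t in lborel. t \<in> {0..T} \<longrightarrow>
        (\<Sum>i\<in>{1,2}. ucomp i (u t) * pairing (lam t) (Yfield i (\<gamma> t))) =
          (\<Sum>i\<in>{1,2}. \<bar>pairing (lam t) (Yfield i (\<gamma> t))\<bar>) \<and>
        (\<Sum>i\<in>{1,2}. \<bar>pairing (lam t) (Yfield i (\<gamma> t))\<bar>) = lam0"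
    using lam0_prop by blast
  from A1 A2 A3 show ?thesis
  proof eventually_elim
    case (elim t)
    show ?case
    proof
      assume t: "t \<in> {0..T}"
      have d1: "(lam has_vector_derivative - dHdp (lam t) (\<gamma> t) (u t)) (at t)"
        and d2: "(\<gamma> has_vector_derivative dHdl (lam t) (\<gamma> t) (u t)) (at t)"
        using elim t by auto
      have "((\<lambda>s. snd (lam s)) has_real_derivative snd (- dHdp (lam t) (\<gamma> t) (u t))) (at t)"
        by (rule hvd_snd[OF d1])
      then have e1: "((\<lambda>s. snd (lam s)) has_real_derivative 0) (at t)"
        by (simp add: dHdp_eq)
      have "((\<lambda>s. fst (lam s)) has_real_derivative fst (- dHdp (lam t) (\<gamma> t) (u t))) (at t)"
        by (rule hvd_fst[OF d1])
      then have e2: "((\<lambda>s. fst (lam s)) has_real_derivative - (fst (u t) * snd (lam t) - snd (u t) * snd (lam t))) (at t)"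
        by (simp add: dHdp_eq)
      have "((\<lambda>s. fst (\<gamma> s)) has_real_derivative fst (dHdl (lam t) (\<gamma> t) (u t))) (at t)"
        by (rule hvd_fst[OF d2])
      then have e3: "((\<lambda>s. fst (\<gamma> s)) has_real_derivative (fst (u t) + snd (u t))) (at t)"
        by (simp add: dHdl_eq)
      have b: "\<bar>fst (u t)\<bar> \<le> 1" "\<bar>snd (u t)\<bar> \<le> 1" using elim t by (auto simp: ucomp_def)
      have pe: "pairing (lam t) (Yfield i (\<gamma> t)) = phi i t" for i
        by (simp add: phi_def switching_def)
      have m: "fst (u t) * phi 1 t + snd (u t) * phi 2 t = \<bar>phi 1 t\<bar> + \<bar>phi 2 t\<bar> \<and>
          \<bar>phi 1 t\<bar> + \<bar>phi 2 t\<bar> = lam0"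
        using elim t by (simp add: pe ucomp_def)
      show "((\<lambda>s. snd (lam s)) has_real_derivative 0) (at t) \<and>
        ((\<lambda>s. fst (lam s)) has_real_derivative - (fst (u t) * snd (lam t) - snd (u t) * snd (lam t))) (at t) \<and>
        ((\<lambda>s. fst (\<gamma> s)) has_real_derivative (fst (u t) + snd (u t))) (at t) \<and>
        \<bar>fst (u t)\<bar> \<le> 1 \<and> \<bar>snd (u t)\<bar> \<le> 1 \<and>
        fst (u t) * phi 1 t + snd (u t) * phi 2 t = \<bar>phi 1 t\<bar> + \<bar>phi 2 t\<bar> \<and>
        \<bar>phi 1 t\<bar> + \<bar>phi 2 t\<bar> = lam0"
        using e1 e2 e3 b m by blast
    qed
  qed
qed

lemma qconst: "t \<in> {0..T} \<Longrightarrow> snd (lam t) = q0"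
proof -
  assume t: "t \<in> {0..T}"
  have "(\<lambda>s. snd (lam s)) t = (\<lambda>s. snd (lam s)) 0"
  proof (rule ac_deriv0_const[where f="\<lambda>s. snd (lam s)"])
    show "abs_continuous_on 0 t (\<lambda>s. snd (lam s))"
      by (rule ac_sub[OF ac_snd[OF aclam]]) (use t in auto)
    show "AE s in lborel. s \<in> {0<..<t} \<longrightarrow> ((\<lambda>s. snd (lam s)) has_real_derivative 0) (at s)"
      using Gfact
    proof eventually_elim
      case (elim s)
      then show ?case using t by auto
    qed
  qed (use t in auto)
  then show ?thesis unfolding q0_def by simp
qed

lemma sumabs: "t \<in> {0..T} \<Longrightarrow> \<bar>phi 1 t\<bar> + \<bar>phi 2 t\<bar> = lam0"
proof (rule AE_eq_cont[where \<alpha>=0 and \<beta>=T and g="\<lambda>t. \<bar>phi 1 t\<bar> + \<bar>phi 2 t\<bar>"])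
  show "continuous_on {0..T} (\<lambda>t. \<bar>phi 1 t\<bar> + \<bar>phi 2 t\<bar>)"
    using cont_phi by (intro continuous_intros)
  show "AE t in lborel. t \<in> {0..T} \<longrightarrow> \<bar>phi 1 t\<bar> + \<bar>phi 2 t\<bar> = lam0"
    using Gfact
  proof eventually_elim
    case (elim t)
    then show ?case by blast
  qed
qed (use Tpos in auto)

lemma lam0pos: "lam0 > 0"
proof -
  obtain a b where ab: "regular_arc T lam \<gamma> a b" using reg by blast
  then have ri: "0 \<le> a" "a < b" "b \<le> T" "\<forall>t\<in>{a<..<b}. \<forall>j\<in>{1,2}. switching lam \<gamma> j t \<noteq> 0"
    unfolding regular_arc_def regular_interval_def by auto
  define t where "t = (a + b) / 2"
  have t: "t \<in> {a<..<b}" "t \<in> {0..T}" using ri unfolding t_def by auto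
  have "phi 1 t \<noteq> 0" using ri(4) t(1) unfolding phi_def by auto
  then show ?thesis using sumabs[OF t(2)] by linarith
qed

lemma usign: "AE t in lborel. t \<in> {0..T} \<longrightarrow> (\<forall>i\<in>{1,2}. phi i t \<noteq> 0 \<longrightarrow> ucomp i (u t) = sgn (phi i t))"
  using Gfact
proof eventually_elim
  case (elim t)
  show ?case
  proof (intro impI ballI)
    fix i :: nat assume t: "t \<in> {0..T}" and i: "i \<in> {1,2}" and nz: "phi i t \<noteq> 0"
    have "fst (u t) * phi 1 t = \<bar>phi 1 t\<bar> \<and> snd (u t) * phi 2 t = \<bar>phi 2 t\<bar>"
      by (rule max_split) (use elim t in auto)
    then show "ucomp i (u t) = sgn (phi i t)"
      using i nz by (auto simp: ucomp_def intro: mult_abs_sgn)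
  qed
qed

end

context setting begin

definition psi :: "nat \<Rightarrow> real \<Rightarrow> real" where
  "psi i t = fst (lam t) + si i * q0 * fst (\<gamma> t)"

lemma psi_phi: "t \<in> {0..T} \<Longrightarrow> psi i t = phi i t"
  by (simp add: psi_def phi_eq qconst)

lemma ac_psi: "abs_continuous_on 0 T (psi i)"
  unfolding psi_def[abs_def]
  by (rule ac_add[OF ac_fst[OF aclam] ac_cmult[OF ac_fst[OF acgam]]])

lemma psi_der:
  assumes i: "i \<in> {1,2}"
  shows "AE t in lborel. t \<in> {0..T} \<longrightarrow> (psi i has_real_derivative 2 * si i * q0 * ucomp (3 - i) (u t)) (at t)"
  using Gfact
proof eventually_elim
  case (elim t)
  show ?case
  proof
    assume t: "t \<in> {0..T}"
    have d1: "((\<lambda>s. fst (lam s)) has_real_derivative - (fst (u t) * snd (lam t) - snd (u t) * snd (lam t))) (at t)"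
      and d2: "((\<lambda>s. fst (\<gamma> s)) has_real_derivative (fst (u t) + snd (u t))) (at t)"
      using elim t by auto
    have "(psi i has_real_derivative
        (- (fst (u t) * snd (lam t) - snd (u t) * snd (lam t)) + si i * q0 * (fst (u t) + snd (u t)))) (at t)"
      unfolding psi_def[abs_def] by (intro DERIV_add d1 DERIV_cmult d2)
    moreover have "- (fst (u t) * snd (lam t) - snd (u t) * snd (lam t)) + si i * q0 * (fst (u t) + snd (u t))
        = 2 * si i * q0 * ucomp (3 - i) (u t)"
      using i qconst[OF t] by (auto simp: si_def ucomp_def algebra_simps)
    ultimately show "(psi i has_real_derivative 2 * si i * q0 * ucomp (3 - i) (u t)) (at t)" by simp
  qed
qed

lemma K:
  assumes i: "i \<in> {1,2}" and ab: "0 \<le> \<alpha>" "\<alpha> < \<beta>" "\<beta> \<le> T"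
    and nz: "\<forall>t\<in>{\<alpha><..<\<beta>}. phi (3 - i) t \<noteq> 0"
  shows "\<exists>k. \<bar>k\<bar> = 2 * \<bar>q0\<bar> \<and> (\<forall>t\<in>{\<alpha>..\<beta>}. phi i t = phi i \<alpha> + k * (t - \<alpha>))"
proof -
  have j: "3 - i \<in> {1,2}" using i by auto
  have c: "continuous_on {\<alpha>..\<beta>} (phi (3 - i))"
    by (rule continuous_on_subset[OF cont_phi]) (use ab in auto)
  define \<rho> :: real where "\<rho> = (if (\<forall>t\<in>{\<alpha><..<\<beta>}. phi (3 - i) t > 0) then 1 else -1)"
  have \<rho>: "\<forall>t\<in>{\<alpha><..<\<beta>}. sgn (phi (3 - i) t) = \<rho>"
    using sign_const[OF c nz] unfolding \<rho>_def by (auto simp: sgn_if)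
  have \<rho>abs: "\<bar>\<rho>\<bar> = 1" unfolding \<rho>_def by simp
  define k where "k = 2 * si i * q0 * \<rho>"
  have kabs: "\<bar>k\<bar> = 2 * \<bar>q0\<bar>" unfolding k_def using \<rho>abs by (simp add: si_def abs_mult)
  have der: "AE t in lborel. t \<in> {\<alpha><..<\<beta>} \<longrightarrow> (psi i has_real_derivative k) (at t)"
    using psi_der[OF i] usign
  proof eventually_elim
    case (elim t)
    show ?case
    proof
      assume t: "t \<in> {\<alpha><..<\<beta>}"
      then have t': "t \<in> {0..T}" using ab by auto
      have "phi (3 - i) t \<noteq> 0" using nz t by auto
      then have "ucomp (3 - i) (u t) = \<rho>" using elim t' j \<rho> t by auto
      then show "(psi i has_real_derivative k) (at t)" using elim t' unfolding k_def by simp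
    qed
  qed
  have "\<forall>t\<in>{\<alpha>..\<beta>}. phi i t = phi i \<alpha> + k * (t - \<alpha>)"
  proof
    fix t assume t: "t \<in> {\<alpha>..\<beta>}"
    have "psi i t = psi i \<alpha> + k * (t - \<alpha>)"
      by (rule ac_deriv_affine[OF ac_sub[OF ac_psi] _ der t]) (use ab in auto)
    moreover have "psi i t = phi i t" "psi i \<alpha> = phi i \<alpha>"
      using t ab by (auto intro!: psi_phi)
    ultimately show "phi i t = phi i \<alpha> + k * (t - \<alpha>)" by simp
  qed
  then show ?thesis using kabs by blast
qed

definition Z :: "real set" where "Z = {t \<in> {0..T}. \<exists>i\<in>{1,2}. phi i t = 0}"

lemma reg_int_iff:
  "regular_interval T lam \<gamma> a b \<longleftrightarrow> 0 \<le> a \<and> a < b \<and> b \<le> T \<and> (\<forall>t\<in>{a<..<b}. t \<notin> Z)"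
  unfolding regular_interval_def Z_def phi_def by auto

lemma Z_closed: "closed Z"
proof -
  have "Z = ({0..T} \<inter> phi 1 -` {0}) \<union> ({0..T} \<inter> phi 2 -` {0})" unfolding Z_def by auto
  moreover have "closed ({0..T} \<inter> phi 1 -` {0})" "closed ({0..T} \<inter> phi 2 -` {0})"
    by (auto intro!: continuous_closed_preimage cont_phi)
  ultimately show ?thesis by auto
qed

lemma Z_sub: "Z \<subseteq> {0..T}" unfolding Z_def by auto

lemma other_nz:
  assumes "t \<in> {0..T}" "i \<in> {1,2}" "phi i t = 0"
  shows "\<bar>phi (3 - i) t\<bar> = lam0" "phi (3 - i) t \<noteq> 0"
proof -
  show "\<bar>phi (3 - i) t\<bar> = lam0" using sumabs[OF assms(1)] assms(2,3) by auto
  then show "phi (3 - i) t \<noteq> 0" using lam0pos by auto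
qed

lemma Zq: "Z \<noteq> {} \<Longrightarrow> q0 \<noteq> 0"
proof
  assume "Z \<noteq> {}" "q0 = 0"
  then obtain z i where z: "z \<in> {0..T}" "i \<in> {1,2}" "phi i z = 0" unfolding Z_def by auto
  have "phi 1 z = fst (lam z)" "phi 2 z = fst (lam z)"
    using qconst[OF z(1)] \<open>q0 = 0\<close> by (auto simp: phi_eq)
  then show False using other_nz[OF z] z(2,3) by auto
qed

lemma other_idx: "i \<in> {1,2} \<Longrightarrow> k \<in> {1::nat,2} \<Longrightarrow> k \<noteq> 3 - i \<Longrightarrow> k = i" by auto

lemma isolated:
  assumes z: "z \<in> Z"
  shows "\<exists>r>0. \<forall>t\<in>Z. \<bar>t - z\<bar> < r \<longrightarrow> t = z"
proof -
  obtain i where i: "i \<in> {1,2}" "phi i z = 0" and z0: "z \<in> {0..T}" using z unfolding Z_def by auto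
  have q: "q0 \<noteq> 0" using Zq z by auto
  have nzj: "phi (3 - i) z \<noteq> 0" using other_nz[OF z0 i] by simp
  obtain r where r: "r > 0" and R: "\<forall>t\<in>{0..T}. \<bar>t - z\<bar> < r \<longrightarrow> phi (3 - i) t \<noteq> 0 \<and> sgn (phi (3 - i) t) = sgn (phi (3 - i) z)"
    using nonzero_nbhd[OF cont_phi z0 nzj] by blast
  have "\<forall>t\<in>Z. \<bar>t - z\<bar> < r \<longrightarrow> t = z"
  proof (intro ballI impI)
    fix t assume tZ: "t \<in> Z" and tr: "\<bar>t - z\<bar> < r"
    have t0: "t \<in> {0..T}" using tZ Z_sub by auto
    have nzt: "phi (3 - i) t \<noteq> 0" using R t0 tr by blast
    obtain k where k: "k \<in> {1,2}" "phi k t = 0" using tZ unfolding Z_def by auto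
    have "k \<noteq> 3 - i" using k(2) nzt by auto
    then have kk: "k = i" using other_idx[OF i(1) k(1)] by auto
    then have pt: "phi i t = 0" using k by simp
    show "t = z"
    proof (rule ccontr)
      assume ne: "t \<noteq> z"
      show False
      proof (cases "z < t")
        case True
        have nz: "\<forall>s\<in>{z<..<t}. phi (3 - i) s \<noteq> 0"
          using R True tr t0 z0 by auto
        obtain c where c: "\<bar>c\<bar> = 2 * \<bar>q0\<bar>" "\<forall>s\<in>{z..t}. phi i s = phi i z + c * (s - z)"
          using K[OF i(1) _ True _ nz] z0 t0 by auto
        have "phi i t = c * (t - z)" using c(2) True i(2) by auto
        moreover have "c \<noteq> 0" using c(1) q by auto
        ultimately show False using pt True by simp
      next
        case False
        then have tz: "t < z" using ne by simp
        have nz: "\<forall>s\<in>{t<..<z}. phi (3 - i) s \<noteq> 0"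
          using R tz tr t0 z0 by auto
        obtain c where c: "\<bar>c\<bar> = 2 * \<bar>q0\<bar>" "\<forall>s\<in>{t..z}. phi i s = phi i t + c * (s - t)"
          using K[OF i(1) _ tz _ nz] z0 t0 by auto
        have "phi i z = c * (z - t)" using c(2) tz pt by auto
        moreover have "c \<noteq> 0" using c(1) q by auto
        ultimately show False using i(2) tz by simp
      qed
    qed
  qed
  then show ?thesis using r by blast
qed

lemma Z_finite: "finite Z"
proof -
  have "compact Z" using Z_closed Z_sub
    by (metis bounded_closed_interval bounded_subset compact_eq_bounded_closed)
  moreover have "\<not> z islimpt Z" if zZ: "z \<in> Z" for z
  proof
    assume "z islimpt Z"
    obtain r where r: "r > 0" "\<forall>t\<in>Z. \<bar>t - z\<bar> < r \<longrightarrow> t = z" using isolated[OF zZ] by blast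
    obtain t where "t \<in> Z" "t \<noteq> z" "dist t z < r"
      using \<open>z islimpt Z\<close> r(1) unfolding islimpt_approachable by blast
    then show False using r(2) by (auto simp: dist_real_def)
  qed
  ultimately have "finite (Z \<inter> Z)" by (rule finite_not_islimpt_in_compact)
  then show ?thesis by simp
qed

lemma arc_ends:
  assumes arc: "regular_arc T lam \<gamma> a b"
  shows "(a = 0 \<or> a \<in> Z) \<and> (b = T \<or> b \<in> Z)"
proof -
  have ri: "0 \<le> a" "a < b" "b \<le> T" "\<forall>t\<in>{a<..<b}. t \<notin> Z"
    using arc unfolding regular_arc_def reg_int_iff by auto
  have max: "\<And>a' b'. regular_interval T lam \<gamma> a' b' \<Longrightarrow> {a<..<b} \<subseteq> {a'<..<b'} \<Longrightarrow> a' = a \<and> b' = b"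
    using arc unfolding regular_arc_def by blast
  have nearZ: "\<exists>r>0. \<forall>t\<in>{0..T}. \<bar>t - x\<bar> < r \<longrightarrow> t \<notin> Z" if x: "x \<in> {0..T}" "x \<notin> Z" for x
  proof -
    have n1: "phi 1 x \<noteq> 0" and n2: "phi 2 x \<noteq> 0" using x unfolding Z_def by auto
    obtain r1 where r1: "r1 > 0" "\<forall>t\<in>{0..T}. \<bar>t - x\<bar> < r1 \<longrightarrow> phi 1 t \<noteq> 0 \<and> sgn (phi 1 t) = sgn (phi 1 x)"
      using nonzero_nbhd[OF cont_phi x(1) n1] by blast
    obtain r2 where r2: "r2 > 0" "\<forall>t\<in>{0..T}. \<bar>t - x\<bar> < r2 \<longrightarrow> phi 2 t \<noteq> 0 \<and> sgn (phi 2 t) = sgn (phi 2 x)"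
      using nonzero_nbhd[OF cont_phi x(1) n2] by blast
    have "\<forall>t\<in>{0..T}. \<bar>t - x\<bar> < min r1 r2 \<longrightarrow> t \<notin> Z"
    proof (intro ballI impI)
      fix t assume "t \<in> {0..T}" "\<bar>t - x\<bar> < min r1 r2"
      then have "phi 1 t \<noteq> 0" "phi 2 t \<noteq> 0" using r1 r2 by auto
      then show "t \<notin> Z" unfolding Z_def by auto
    qed
    then show ?thesis using r1 r2 by (intro exI[of _ "min r1 r2"]) auto
  qed
  have A: "a = 0 \<or> a \<in> Z"
  proof (rule ccontr)
    assume "\<not> (a = 0 \<or> a \<in> Z)"
    then have a: "a \<noteq> 0" "a \<notin> Z" by auto
    then have a0: "a \<in> {0..T}" "0 < a" using ri by auto
    obtain r where r: "r > 0" "\<forall>t\<in>{0..T}. \<bar>t - a\<bar> < r \<longrightarrow> t \<notin> Z" using nearZ[OF a0(1) a(2)] by blast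
    define a' where "a' = max 0 (a - r / 2)"
    have a'a: "a' < a" "0 \<le> a'" unfolding a'_def using r a0 by auto
    have "regular_interval T lam \<gamma> a' b"
      unfolding reg_int_iff
    proof (intro conjI ballI)
      fix t assume t: "t \<in> {a'<..<b}"
      show "t \<notin> Z"
      proof (cases "t \<le> a")
        case True
        then have "\<bar>t - a\<bar> < r" "t \<in> {0..T}" using t a'a ri unfolding a'_def by auto
        then show ?thesis using r(2) by blast
      next
        case False
        then show ?thesis using ri(4) t by auto
      qed
    qed (use a'a ri in auto)
    moreover have "{a<..<b} \<subseteq> {a'<..<b}" using a'a by auto
    ultimately have "a' = a" using max by blast
    then show False using a'a by simp
  qed
  have B: "b = T \<or> b \<in> Z"
  proof (rule ccontr)
    assume "\<not> (b = T \<or> b \<in> Z)"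
    then have b: "b \<noteq> T" "b \<notin> Z" by auto
    then have b0: "b \<in> {0..T}" "b < T" using ri by auto
    obtain r where r: "r > 0" "\<forall>t\<in>{0..T}. \<bar>t - b\<bar> < r \<longrightarrow> t \<notin> Z" using nearZ[OF b0(1) b(2)] by blast
    define b' where "b' = min T (b + r / 2)"
    have b'b: "b < b'" "b' \<le> T" unfolding b'_def using r b0 by auto
    have "regular_interval T lam \<gamma> a b'"
      unfolding reg_int_iff
    proof (intro conjI ballI)
      fix t assume t: "t \<in> {a<..<b'}"
      show "t \<notin> Z"
      proof (cases "t \<ge> b")
        case True
        then have "\<bar>t - b\<bar> < r" "t \<in> {0..T}" using t b'b ri unfolding b'_def by auto
        then show ?thesis using r(2) by blast
      next
        case False
        then show ?thesis using ri(4) t by auto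
      qed
    qed (use b'b ri in auto)
    moreover have "{a<..<b} \<subseteq> {a<..<b'}" using b'b by auto
    ultimately have "b' = b" using max by blast
    then show False using b'b by simp
  qed
  show ?thesis using A B by blast
qed

end

lemma endpoint_sign:
  fixes f :: "real \<Rightarrow> real"
  assumes c: "continuous_on {a..b} f" and ab: "a < b" and pos: "\<forall>t\<in>{a<..<b}. 0 < f t"
  shows "0 \<le> f a \<and> 0 \<le> f b"
proof
  have "(f \<longlongrightarrow> f a) (at_right a)" by (rule continuous_on_Icc_at_rightD[OF c ab])
  moreover have "eventually (\<lambda>t. 0 \<le> f t) (at_right a)"
    using eventually_at_right_real[OF ab]
  proof eventually_elim
    case (elim t)
    then show ?case using pos less_imp_le by blast
  qed
  ultimately show "0 \<le> f a" by (rule tendsto_lowerbound) simp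
next
  have "(f \<longlongrightarrow> f b) (at_left b)" by (rule continuous_on_Icc_at_leftD[OF c ab])
  moreover have "eventually (\<lambda>t. 0 \<le> f t) (at_left b)"
    using eventually_at_left_real[OF ab]
  proof eventually_elim
    case (elim t)
    then show ?case using pos less_imp_le by blast
  qed
  ultimately show "0 \<le> f b" by (rule tendsto_lowerbound) simp
qed

context setting begin

definition F :: "real set" where "F = Z \<union> {0, T}"

lemma F_fin: "finite F" unfolding F_def using Z_finite by simp
lemma F_sub: "F \<subseteq> {0..T}" unfolding F_def using Z_sub Tpos by auto

lemma ARC:
  assumes p: "p \<in> F" and q: "q \<in> F" and pq: "p < q" and no: "\<forall>z\<in>F. \<not> (p < z \<and> z < q)"
  shows "regular_arc T lam \<gamma> p q"
  unfolding regular_arc_def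
proof (intro conjI allI impI)
  have p0: "0 \<le> p" and qT: "q \<le> T" using p q F_sub by auto
  show ri: "regular_interval T lam \<gamma> p q"
    unfolding reg_int_iff
  proof (intro conjI ballI)
    fix t assume "t \<in> {p<..<q}"
    then show "t \<notin> Z" using no unfolding F_def by auto
  qed (use p0 qT pq in auto)
  fix a' b' assume H: "regular_interval T lam \<gamma> a' b' \<and> {p<..<q} \<subseteq> {a'<..<b'}"
  then have a'b': "0 \<le> a'" "a' < b'" "b' \<le> T" "\<forall>t\<in>{a'<..<b'}. t \<notin> Z"
    unfolding reg_int_iff by auto
  have le: "a' \<le> p" "q \<le> b'" using H pq greaterThanLessThan_subseteq_greaterThanLessThan by auto
  show "a' = p"
  proof (rule ccontr)
    assume "a' \<noteq> p"
    then have "a' < p" using le by simp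
    then have "p \<in> {a'<..<b'}" using pq le by auto
    then have "p \<notin> Z" using a'b'(4) by blast
    then have "p = 0 \<or> p = T" using p unfolding F_def by auto
    then show False
    proof
      assume "p = 0" then show False using \<open>a' < p\<close> a'b'(1) by simp
    next
      assume "p = T" then show False using pq qT by simp
    qed
  qed
  show "b' = q"
  proof (rule ccontr)
    assume "b' \<noteq> q"
    then have "q < b'" using le by simp
    then have "q \<in> {a'<..<b'}" using pq le by auto
    then have "q \<notin> Z" using a'b'(4) by blast
    then have "q = 0 \<or> q = T" using q unfolding F_def by auto
    then show False
    proof
      assume "q = 0" then show False using pq p0 by simp
    next
      assume "q = T" then show False using \<open>q < b'\<close> a'b'(3) by simp
    qed
  qed
qed

lemma bang_bang: "regular_bang_bang T lam \<gamma>"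
  unfolding regular_bang_bang_def
proof (intro exI conjI)
  define A where "A = {(p, q). p \<in> F \<and> q \<in> F \<and> p < q \<and> (\<forall>z\<in>F. \<not> (p < z \<and> z < q))}"
  show "finite F" by (rule F_fin)
  show "finite A"
    by (rule finite_subset[of _ "F \<times> F"]) (use F_fin in \<open>auto simp: A_def\<close>)
  show "\<forall>(a, b)\<in>A. regular_arc T lam \<gamma> a b"
    unfolding A_def using ARC by auto
  show "{0..T} - F = (\<Union>(a, b)\<in>A. {a<..<b})"
  proof
    show "{0..T} - F \<subseteq> (\<Union>(a, b)\<in>A. {a<..<b})"
    proof
      fix x assume x: "x \<in> {0..T} - F"
      define P where "P = {z \<in> F. z < x}"
      define Q where "Q = {z \<in> F. x < z}"
      have xF: "x \<notin> F" using x by auto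
      have "0 \<in> F" "T \<in> F" unfolding F_def by auto
      then have x0: "0 < x" "x < T" using x by (auto simp: order.order_iff_strict)
      have Pne: "0 \<in> P" using x0 \<open>0 \<in> F\<close> unfolding P_def by auto
      have Qne: "T \<in> Q" using x0 \<open>T \<in> F\<close> unfolding Q_def by auto
      have Pfin: "finite P" and Qfin: "finite Q" unfolding P_def Q_def using F_fin by auto
      define p where "p = Max P"
      define q where "q = Min Q"
      have pP: "p \<in> P" unfolding p_def using Pfin Pne by (intro Max_in) auto
      have qQ: "q \<in> Q" unfolding q_def using Qfin Qne by (intro Min_in) auto
      have "(p, q) \<in> A"
        unfolding A_def
      proof (clarsimp, intro conjI ballI)
        show "p \<in> F" "q \<in> F" using pP qQ unfolding P_def Q_def by auto
        show "p < q" using pP qQ unfolding P_def Q_def by auto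
        fix z assume z: "z \<in> F"
        show "p < z \<longrightarrow> \<not> z < q"
        proof (intro impI notI)
          assume pz: "p < z" and zq: "z < q"
          show False
          proof (cases "z < x")
            case True
            then have "z \<in> P" using z unfolding P_def by auto
            then have "z \<le> p" unfolding p_def using Pfin by auto
            then show False using pz by simp
          next
            case False
            then have "x < z" using z xF by (cases "z = x") auto
            then have "z \<in> Q" using z unfolding Q_def by auto
            then have "q \<le> z" unfolding q_def using Qfin by auto
            then show False using zq by simp
          qed
        qed
      qed
      moreover have "x \<in> {p<..<q}" using pP qQ unfolding P_def Q_def by auto
      ultimately show "x \<in> (\<Union>(a, b)\<in>A. {a<..<b})" by blast
    qed
    show "(\<Union>(a, b)\<in>A. {a<..<b}) \<subseteq> {0..T} - F"
    proof
      fix x assume "x \<in> (\<Union>(a, b)\<in>A. {a<..<b})"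
      then obtain p q where pq: "(p, q) \<in> A" "x \<in> {p<..<q}" by blast
      then have pF: "p \<in> F" and qF: "q \<in> F" and nz: "\<forall>z\<in>F. \<not> (p < z \<and> z < q)" unfolding A_def by auto
      have "0 \<le> p" "q \<le> T" using pF qF F_sub by auto
      then have "x \<in> {0..T}" using pq(2) by auto
      moreover have "x \<notin> F" using nz pq(2) by auto
      ultimately show "x \<in> {0..T} - F" by blast
    qed
  qed
qed

lemma next_arc:
  assumes "b \<in> Z" "b < T"
  shows "\<exists>c. regular_arc T lam \<gamma> b c"
proof -
  define Q where "Q = {z \<in> F. b < z}"
  have TQ: "T \<in> Q" unfolding Q_def F_def using assms by auto
  have Qfin: "finite Q" unfolding Q_def using F_fin by auto
  define c where "c = Min Q"
  have cQ: "c \<in> Q" unfolding c_def using Qfin TQ by (intro Min_in) auto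
  have "regular_arc T lam \<gamma> b c"
  proof (rule ARC)
    show "b \<in> F" using assms unfolding F_def by auto
    show "c \<in> F" "b < c" using cQ unfolding Q_def by auto
    show "\<forall>z\<in>F. \<not> (b < z \<and> z < c)"
    proof (intro ballI notI)
      fix z assume "z \<in> F" "b < z \<and> z < c"
      then have "z \<in> Q" unfolding Q_def by auto
      then have "c \<le> z" unfolding c_def using Qfin by auto
      then show False using \<open>b < z \<and> z < c\<close> by simp
    qed
  qed
  then show ?thesis by blast
qed

lemma arc_facts:
  assumes "regular_arc T lam \<gamma> a b"
  shows "0 \<le> a" "a < b" "b \<le> T" "\<forall>t\<in>{a<..<b}. t \<notin> Z"
  using assms unfolding regular_arc_def reg_int_iff by auto

lemma arc_nz:
  assumes "regular_arc T lam \<gamma> a b" "j \<in> {1,2}"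
  shows "\<forall>t\<in>{a<..<b}. phi j t \<noteq> 0"
  using arc_facts[OF assms(1)] assms(2) unfolding Z_def by auto

lemma lengths:
  "\<exists>s>0. \<forall>a b. regular_arc T lam \<gamma> a b \<longrightarrow> b - a \<le> s \<and> (0 < a \<and> b < T \<longrightarrow> b - a = s)"
proof (cases "q0 = 0")
  case True
  then have Z0: "Z = {}" using Zq by auto
  show ?thesis
  proof (intro exI[of _ T] conjI allI impI)
    fix a b assume arc: "regular_arc T lam \<gamma> a b"
    then have "a = 0" "b = T" using arc_ends[OF arc] Z0 by auto
    then show "b - a \<le> T" "b - a = T" by auto
  qed (use Tpos in auto)
next
  case False
  define s where "s = lam0 / (2 * \<bar>q0\<bar>)"
  have spos: "s > 0" unfolding s_def using False lam0pos by auto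
  have key: "\<bar>c\<bar> = 2 * \<bar>q0\<bar> \<Longrightarrow> \<bar>c\<bar> * L = lam0 \<Longrightarrow> L = s" for c L
    unfolding s_def using False by (auto simp: field_simps)
  have key2: "\<bar>c\<bar> = 2 * \<bar>q0\<bar> \<Longrightarrow> \<bar>c\<bar> * L \<le> lam0 \<Longrightarrow> L \<le> s" for c L
    unfolding s_def using False by (auto simp: field_simps)
  show ?thesis
  proof (intro exI[of _ s] conjI allI impI)
    fix a b assume arc: "regular_arc T lam \<gamma> a b"
    note af = arc_facts[OF arc]
    have a0: "a \<in> {0..T}" and b0: "b \<in> {0..T}" using af by auto
    have i1: "(1::nat) \<in> {1,2}" by simp
    have nz2: "\<forall>t\<in>{a<..<b}. phi (3 - 1) t \<noteq> 0" using arc_nz[OF arc, of 2] by simp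
    obtain c where c: "\<bar>c\<bar> = 2 * \<bar>q0\<bar>" "\<forall>t\<in>{a..b}. phi 1 t = phi 1 a + c * (t - a)"
      using K[OF i1 af(1) af(2) af(3) nz2] by (elim exE conjE)
    have bab: "b \<in> {a..b}" using af(2) by simp
    have pb: "phi 1 b = phi 1 a + c * (b - a)" using c(2) bab by blast
    have cont1: "continuous_on {a..b} (phi 1)"
      by (rule continuous_on_subset[OF cont_phi]) (use af in auto)
    have sgn1: "(\<forall>t\<in>{a<..<b}. phi 1 t > 0) \<or> (\<forall>t\<in>{a<..<b}. phi 1 t < 0)"
      by (rule sign_const[OF cont1 arc_nz[OF arc, of 1]]) simp
    have same: "(0 \<le> phi 1 a \<and> 0 \<le> phi 1 b) \<or> (phi 1 a \<le> 0 \<and> phi 1 b \<le> 0)"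
    proof (cases "\<forall>t\<in>{a<..<b}. phi 1 t > 0")
      case True
      then show ?thesis using endpoint_sign[OF cont1 af(2)] by auto
    next
      case False
      then have neg: "\<forall>t\<in>{a<..<b}. 0 < - phi 1 t" using sgn1 by auto
      have "continuous_on {a..b} (\<lambda>t. - phi 1 t)" using cont1 by (intro continuous_intros)
      then show ?thesis using endpoint_sign[OF _ af(2) neg] by auto
    qed
    have la: "\<bar>phi 1 a\<bar> \<le> lam0" "\<bar>phi 1 b\<bar> \<le> lam0" using sumabs[OF a0] sumabs[OF b0] by auto
    have "\<bar>c * (b - a)\<bar> \<le> lam0" using pb same la by auto
    then have "\<bar>c\<bar> * (b - a) \<le> lam0" using af by (simp add: abs_mult)
    then show "b - a \<le> s" by (rule key2[OF c(1)])
  next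
    fix a b assume arc: "regular_arc T lam \<gamma> a b" and int: "0 < a \<and> b < T"
    note af = arc_facts[OF arc]
    have aZ: "a \<in> Z" and bZ: "b \<in> Z" using arc_ends[OF arc] int by auto
    obtain i where i: "i \<in> {1,2}" "phi i a = 0" using aZ unfolding Z_def by auto
    have j: "3 - i \<in> {1,2}" using i by auto
    obtain c where c: "\<bar>c\<bar> = 2 * \<bar>q0\<bar>" "\<forall>t\<in>{a..b}. phi i t = phi i a + c * (t - a)"
      using K[OF i(1) af(1,2,3) arc_nz[OF arc j]] by auto
    have bab: "b \<in> {a..b}" using af(2) by simp
    have pb: "phi i b = c * (b - a)" using c(2) bab i(2) by simp
    have cnz: "c \<noteq> 0" using c(1) False by simp
    then have "phi i b \<noteq> 0" using pb af by simp
    obtain i' where i': "i' \<in> {1,2}" "phi i' b = 0" using bZ unfolding Z_def by auto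
    have "i' \<noteq> i" using i' \<open>phi i b \<noteq> 0\<close> by auto
    then have ii: "i' = 3 - i" using i i' by auto
    have "\<bar>phi (3 - i') b\<bar> = lam0" using other_nz[OF _ i'] af by auto
    moreover have "3 - i' = i" using ii i by auto
    ultimately have "\<bar>c\<bar> * (b - a) = lam0" using pb af by (simp add: abs_mult)
    then show "b - a = s" by (rule key[OF c(1)])
  qed (rule spos)
qed

end

context setting begin

lemma JA:
  assumes arc1: "regular_arc T lam \<gamma> a t" and arc2: "regular_arc T lam \<gamma> t b"
    and k: "k \<in> {1,2}" and pk: "phi k t = 0"
  shows "\<exists>\<sigma>\<in>{-1,1::real}.
           (AE s in lborel. s \<in> {a<..<t} \<longrightarrow> ucomp k (u s) = \<sigma>) \<and>
           (AE s in lborel. s \<in> {t<..<b} \<longrightarrow> ucomp k (u s) = - \<sigma>)"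
    "\<exists>\<rho>\<in>{-1,1::real}. (AE s in lborel. s \<in> {a<..<b} \<longrightarrow> ucomp (3 - k) (u s) = \<rho>)"
proof -
  note f1 = arc_facts[OF arc1] and f2 = arc_facts[OF arc2]
  have t0: "t \<in> {0..T}" using f1(1,2) f2(2,3) by auto
  have j: "3 - k \<in> {1,2}" using k by auto
  have tZ: "t \<in> Z" unfolding Z_def using t0 k pk by blast
  have q: "q0 \<noteq> 0" using Zq tZ by auto
  have nzj: "\<forall>s\<in>{a<..<b}. phi (3 - k) s \<noteq> 0"
  proof
    fix s assume s: "s \<in> {a<..<b}"
    consider "s < t" | "s = t" | "t < s" by linarith
    then show "phi (3 - k) s \<noteq> 0"
    proof cases
      case 1
      then have "s \<in> {a<..<t}" using s by simp
      then show ?thesis using arc_nz[OF arc1 j] by blast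
    next
      case 2
      then show ?thesis using other_nz[OF t0 k pk] by simp
    next
      case 3
      then have "s \<in> {t<..<b}" using s by simp
      then show ?thesis using arc_nz[OF arc2 j] by blast
    qed
  qed
  have ab: "0 \<le> a" "a < b" "b \<le> T" using f1(1,2) f2(2,3) by auto
  have contj: "continuous_on {a..b} (phi (3 - k))"
    by (rule continuous_on_subset[OF cont_phi]) (use ab in auto)
  define \<rho> :: real where "\<rho> = (if (\<forall>s\<in>{a<..<b}. phi (3 - k) s > 0) then 1 else -1)"
  have \<rho>: "\<forall>s\<in>{a<..<b}. sgn (phi (3 - k) s) = \<rho>"
    using sign_const[OF contj nzj] unfolding \<rho>_def by (auto simp: sgn_if)
  have aeJ: "AE s in lborel. s \<in> {a<..<b} \<longrightarrow> ucomp (3 - k) (u s) = \<rho>"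
    using usign
  proof eventually_elim
    case (elim s)
    show ?case
    proof
      assume s: "s \<in> {a<..<b}"
      then have s0: "s \<in> {0..T}" using ab by auto
      have "phi (3 - k) s \<noteq> 0" using nzj s by blast
      then have "ucomp (3 - k) (u s) = sgn (phi (3 - k) s)" using elim s0 j by blast
      then show "ucomp (3 - k) (u s) = \<rho>" using \<rho> s by simp
    qed
  qed
  show "\<exists>\<rho>\<in>{-1,1::real}. (AE s in lborel. s \<in> {a<..<b} \<longrightarrow> ucomp (3 - k) (u s) = \<rho>)"
  proof (rule bexI[where x=\<rho>])
    show "AE s in lborel. s \<in> {a<..<b} \<longrightarrow> ucomp (3 - k) (u s) = \<rho>" by (rule aeJ)
    show "\<rho> \<in> {-1,1}" unfolding \<rho>_def by simp
  qed
  obtain c where c: "\<bar>c\<bar> = 2 * \<bar>q0\<bar>" "\<forall>s\<in>{a..b}. phi k s = phi k a + c * (s - a)"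
    using K[OF k ab(1) ab(2) ab(3) nzj] by (elim exE conjE)
  have cnz: "c \<noteq> 0" using c(1) q by simp
  have tab: "t \<in> {a..b}" using f1(2) f2(2) by simp
  have "phi k t = phi k a + c * (t - a)" using c(2) tab by blast
  then have pa: "phi k a = - (c * (t - a))" using pk by linarith
  have ps: "phi k s = c * (s - t)" if sab: "s \<in> {a..b}" for s
  proof -
    have "phi k s = phi k a + c * (s - a)" using c(2) sab by blast
    moreover have "c * (s - a) - c * (t - a) = c * (s - t)" by (simp add: algebra_simps)
    ultimately show ?thesis using pa by linarith
  qed
  define \<sigma> where "\<sigma> = - sgn c"
  have \<sigma>: "\<sigma> \<in> {-1,1}" unfolding \<sigma>_def using cnz by (auto simp: sgn_if)
  have left: "AE s in lborel. s \<in> {a<..<t} \<longrightarrow> ucomp k (u s) = \<sigma>"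
    using usign
  proof eventually_elim
    case (elim s)
    show ?case
    proof
      assume s: "s \<in> {a<..<t}"
      then have s0: "s \<in> {0..T}" and sab: "s \<in> {a..b}" using ab f1(2) f2(2) by auto
      have v: "phi k s = c * (s - t)" by (rule ps[OF sab])
      have "s - t < 0" using s by simp
      then have "phi k s \<noteq> 0" "sgn (phi k s) = \<sigma>" using cnz v unfolding \<sigma>_def
        by (auto simp: sgn_mult)
      then show "ucomp k (u s) = \<sigma>" using elim s0 k by auto
    qed
  qed
  have right: "AE s in lborel. s \<in> {t<..<b} \<longrightarrow> ucomp k (u s) = - \<sigma>"
    using usign
  proof eventually_elim
    case (elim s)
    show ?case
    proof
      assume s: "s \<in> {t<..<b}"
      then have s0: "s \<in> {0..T}" and sab: "s \<in> {a..b}" using ab f1(2) f2(2) by auto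
      have v: "phi k s = c * (s - t)" by (rule ps[OF sab])
      have "s - t > 0" using s by simp
      then have "phi k s \<noteq> 0" "sgn (phi k s) = - \<sigma>" using cnz v unfolding \<sigma>_def
        by (auto simp: sgn_mult)
      then show "ucomp k (u s) = - \<sigma>" using elim s0 k by auto
    qed
  qed
  show "\<exists>\<sigma>\<in>{-1,1::real}.
           (AE s in lborel. s \<in> {a<..<t} \<longrightarrow> ucomp k (u s) = \<sigma>) \<and>
           (AE s in lborel. s \<in> {t<..<b} \<longrightarrow> ucomp k (u s) = - \<sigma>)"
    by (rule bexI[where x=\<sigma>], rule conjI[OF left right], rule \<sigma>)
qed

lemma junction_Z:
  assumes "regular_arc T lam \<gamma> a t" "regular_arc T lam \<gamma> t b"
  shows "t \<in> Z"
proof -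
  have "t < b" "b \<le> T" using arc_facts[OF assms(2)] by auto
  then show ?thesis using arc_ends[OF assms(1)] by auto
qed

lemma conj3:
  assumes "junction T lam \<gamma> t"
  shows "\<exists>i\<in>{1,2}. switches_only T lam \<gamma> u i t"
proof -
  obtain a b where arcs: "regular_arc T lam \<gamma> a t" "regular_arc T lam \<gamma> t b"
    using assms unfolding junction_def by blast
  have "t \<in> Z" by (rule junction_Z[OF arcs])
  then obtain i where i: "i \<in> {1,2}" "phi i t = 0" unfolding Z_def by auto
  have "switches_only T lam \<gamma> u i t"
    unfolding switches_only_def
  proof (intro allI impI conjI)
    fix a' b' assume H: "regular_arc T lam \<gamma> a' t \<and> regular_arc T lam \<gamma> t b'"
    show "\<exists>\<sigma>\<in>{-1,1::real}.
           (AE s in lborel. s \<in> {a'<..<t} \<longrightarrow> ucomp i (u s) = \<sigma>) \<and>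
           (AE s in lborel. s \<in> {t<..<b'} \<longrightarrow> ucomp i (u s) = - \<sigma>)"
      using JA(1)[of a' t b' i] H i by blast
    show "\<exists>\<rho>\<in>{-1,1::real}. (AE s in lborel. s \<in> {a'<..<b'} \<longrightarrow> ucomp (3 - i) (u s) = \<rho>)"
      using JA(2)[of a' t b' i] H i by blast
  qed
  then show ?thesis using i by blast
qed

lemma SW:
  assumes jt: "junction T lam \<gamma> t" and i: "i \<in> {1,2}" and sw: "switches_only T lam \<gamma> u i t"
  shows "phi i t = 0"
proof (rule ccontr)
  assume ne: "phi i t \<noteq> 0"
  obtain a b where arcs: "regular_arc T lam \<gamma> a t" "regular_arc T lam \<gamma> t b"
    using jt unfolding junction_def by blast
  have "t \<in> Z" by (rule junction_Z[OF arcs])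
  then obtain k where k: "k \<in> {1,2}" "phi k t = 0" unfolding Z_def by auto
  have "k \<noteq> i" using k ne by auto
  then have ki: "k = 3 - i" using k i by auto
  obtain \<sigma> where \<sigma>: "\<sigma> \<in> {-1,1::real}"
    "AE s in lborel. s \<in> {a<..<t} \<longrightarrow> ucomp k (u s) = \<sigma>"
    "AE s in lborel. s \<in> {t<..<b} \<longrightarrow> ucomp k (u s) = - \<sigma>"
    using JA(1)[OF arcs k] by blast
  obtain \<rho> where \<rho>: "\<rho> \<in> {-1,1::real}" "AE s in lborel. s \<in> {a<..<b} \<longrightarrow> ucomp (3 - i) (u s) = \<rho>"
    using sw arcs unfolding switches_only_def by blast
  have \<rho>k: "AE s in lborel. s \<in> {a<..<b} \<longrightarrow> ucomp k (u s) = \<rho>" using \<rho>(2) ki by simp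
  have at: "a < t" "t < b" using arc_facts[OF arcs(1)] arc_facts[OF arcs(2)] by auto
  have "AE s in lborel. s \<in> {a<..<t} \<longrightarrow> ucomp k (u s) = \<rho>"
    by (rule AE_mono_interval[OF \<rho>k]) (use at in auto)
  with \<sigma>(2) have "AE s in lborel. s \<in> {a<..<t} \<longrightarrow> \<sigma> = \<rho>"
  proof eventually_elim
    case (elim s) then show ?case by auto
  qed
  then have "\<exists>s\<in>{a<..<t}. \<sigma> = \<rho>" by (rule AE_interval_exists[OF _ at(1)])
  then have e1: "\<sigma> = \<rho>" by blast
  have "AE s in lborel. s \<in> {t<..<b} \<longrightarrow> ucomp k (u s) = \<rho>"
    by (rule AE_mono_interval[OF \<rho>k]) (use at in auto)
  with \<sigma>(3) have "AE s in lborel. s \<in> {t<..<b} \<longrightarrow> - \<sigma> = \<rho>"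
  proof eventually_elim
    case (elim s) then show ?case by auto
  qed
  then have "\<exists>s\<in>{t<..<b}. - \<sigma> = \<rho>" by (rule AE_interval_exists[OF _ at(2)])
  then have e2: "- \<sigma> = \<rho>" by blast
  show False using e1 e2 \<sigma>(1) by auto
qed

lemma conj4:
  assumes jt: "junction T lam \<gamma> t" and jt': "junction T lam \<gamma> t'" and tt: "t < t'"
    and nojun: "\<forall>r\<in>{t<..<t'}. \<not> junction T lam \<gamma> r"
    and i: "i \<in> {1,2}" and sw: "switches_only T lam \<gamma> u i t" and sw': "switches_only T lam \<gamma> u i t'"
  shows False
proof -
  have p: "phi i t = 0" by (rule SW[OF jt i sw])
  have p': "phi i t' = 0" by (rule SW[OF jt' i sw'])
  obtain a b where arcs: "regular_arc T lam \<gamma> a t" "regular_arc T lam \<gamma> t b"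
    using jt unfolding junction_def by blast
  obtain a' b' where arcs': "regular_arc T lam \<gamma> a' t'" "regular_arc T lam \<gamma> t' b'"
    using jt' unfolding junction_def by blast
  have t'Z: "t' \<in> Z" by (rule junction_Z[OF arcs'])
  note fb = arc_facts[OF arcs(2)] and fb' = arc_facts[OF arcs'(2)]
  have "b \<le> t'"
  proof (rule ccontr)
    assume "\<not> b \<le> t'"
    then have "t' \<in> {t<..<b}" using tt by auto
    then show False using fb(4) t'Z by blast
  qed
  have "b = t'"
  proof (rule ccontr)
    assume "b \<noteq> t'"
    then have bt': "b < t'" using \<open>b \<le> t'\<close> by simp
    have bT: "b < T" using bt' fb'(1,2,3) by auto
    then have bZ: "b \<in> Z" using arc_ends[OF arcs(2)] by auto
    obtain c where "regular_arc T lam \<gamma> b c" using next_arc[OF bZ bT] by blast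
    then have "junction T lam \<gamma> b" unfolding junction_def using arcs(2) by blast
    moreover have "b \<in> {t<..<t'}" using bt' fb(2) by auto
    ultimately show False using nojun by blast
  qed
  then have arc: "regular_arc T lam \<gamma> t t'" using arcs(2) by simp
  note fa = arc_facts[OF arc]
  have j: "3 - i \<in> {1,2}" using i by auto
  obtain c where c: "\<bar>c\<bar> = 2 * \<bar>q0\<bar>" "\<forall>s\<in>{t..t'}. phi i s = phi i t + c * (s - t)"
    using K[OF i fa(1) fa(2) fa(3) arc_nz[OF arc j]] by (elim exE conjE)
  have q: "q0 \<noteq> 0" using Zq t'Z by auto
  have tt': "t' \<in> {t..t'}" using tt by simp
  have "phi i t' = c * (t' - t)" using c(2) tt' p by simp
  moreover have "c \<noteq> 0" using c(1) q by simp
  ultimately show False using p' tt by simp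
qed

end

theorem mainTheorem7:
  fixes T :: real and lam \<gamma> u :: "real \<Rightarrow> real \<times> real"
  assumes ext: "extremal_pair T lam \<gamma> u"
    and reg: "\<exists>a b. regular_arc T lam \<gamma> a b"
  shows "regular_bang_bang T lam \<gamma>
    \<and> (\<exists>s>0. \<forall>a b. regular_arc T lam \<gamma> a b \<longrightarrow>
          b - a \<le> s \<and> (0 < a \<and> b < T \<longrightarrow> b - a = s))
    \<and> (\<forall>t. junction T lam \<gamma> t \<longrightarrow> (\<exists>i\<in>{1,2}. switches_only T lam \<gamma> u i t))
    \<and> (\<forall>t t' i i'. junction T lam \<gamma> t \<and> junction T lam \<gamma> t' \<and> t < t'
          \<and> (\<forall>r\<in>{t<..<t'}. \<not> junction T lam \<gamma> r)
          \<and> i \<in> {1,2} \<and> i' \<in> {1,2}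
          \<and> switches_only T lam \<gamma> u i t \<and> switches_only T lam \<gamma> u i' t'
          \<longrightarrow> i \<noteq> i')"
proof -
  interpret S: setting T lam \<gamma> u by (rule setting.intro[OF ext reg])
  have c1: "regular_bang_bang T lam \<gamma>" by (rule S.bang_bang)
  have c2: "\<exists>s>0. \<forall>a b. regular_arc T lam \<gamma> a b \<longrightarrow>
          b - a \<le> s \<and> (0 < a \<and> b < T \<longrightarrow> b - a = s)" by (rule S.lengths)
  have c3: "\<forall>t. junction T lam \<gamma> t \<longrightarrow> (\<exists>i\<in>{1,2}. switches_only T lam \<gamma> u i t)"
    using S.conj3 by blast
  have c4: "\<forall>t t' i i'. junction T lam \<gamma> t \<and> junction T lam \<gamma> t' \<and> t < t'
          \<and> (\<forall>r\<in>{t<..<t'}. \<not> junction T lam \<gamma> r)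
          \<and> i \<in> {1,2} \<and> i' \<in> {1,2}
          \<and> switches_only T lam \<gamma> u i t \<and> switches_only T lam \<gamma> u i' t'
          \<longrightarrow> i \<noteq> i'"
  proof (intro allI impI notI)
    fix t t' :: real and i i' :: nat
    assume H: "junction T lam \<gamma> t \<and> junction T lam \<gamma> t' \<and> t < t'
          \<and> (\<forall>r\<in>{t<..<t'}. \<not> junction T lam \<gamma> r)
          \<and> i \<in> {1,2} \<and> i' \<in> {1,2}
          \<and> switches_only T lam \<gamma> u i t \<and> switches_only T lam \<gamma> u i' t'"
      and eq: "i = i'"
    have sw': "switches_only T lam \<gamma> u i t'" using H eq by simp
    show False
      by (rule S.conj4[of t t' i]) (use H sw' in blast)+
  qed
  show ?thesis using c1 c2 c3 c4 by blast
qed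

end
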